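(* Let $\mathbb{A}$ be a 2-category and $p:e\to b$ a 1-cell such that $\mathbb{A}$ has the two-dimensional cokernel diagram of $p$, a right Kan extension $(t,\gamma)$ of $p$ along $p$ exists, and it is preserved by $\delta^0:b\to b\uparrow_pb$. Let $\mathsf{T}=(b,t,m,\eta)$ be the codensity monad of $p$. For each object $x$ consider the factorizations $$\mathbb{A}(x,p)=U^{H}_x\circ K^{H}_x:\ \mathbb{A}(x,e)\to \mathrm{Desc}_p(x)\to\mathbb{A}(x,b),\qquad \mathbb{A}(x,p)=U^{\mathsf{T}}_x\circ K^{\mathsf{T}}_x:\ \mathbb{A}(x,e)\to \mathrm{Alg}_{\mathsf{T}}(x)\to\mathbb{A}(x,b),$$ where $K^H_x(g)=(pg,\alpha\ast\mathrm{id}_g)$, $K^H_x(\chi)=\mathrm{id}_p\ast\chi$, $K^{\mathsf{T}}_x(g)=(pg,\gamma\ast\mathrm{id}_g)$, $K^{\mathsf{T}}_x(\chi)=\mathrm{id}_p\ast\chi$, and $U^H_x$, $U^{\mathsf{T}}_x$ are the forgetful functors $(h,\beta)\mapsto h$, $\xi\mapsto\xi$. Then these two factorizations are isomorphic, 2-naturally in $x$: there are isomorphisms of categories $\Phi_x:\mathrm{Desc}_p(x)\to\mathrm{Alg}_{\mathsf{T}}(x)$, 2-natural in $x$ (with respect to precomposition by 1-cells and 2-cells $x'\to x$), such that $U^{\mathsf{T}}_x\Phi_x=U^H_x$ and $\Phi_xK^H_x=K^{\mathsf{T}}_x$.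
   Context: A 2-category is a $\mathbf{Cat}$-enriched category; composition of 1-cells is juxtaposition, vertical composition of 2-cells is $\cdot$, horizontal composition is $\ast$, $\mathrm{id}_f$ is the identity 2-cell on $f$; $\mathbb{A}(x,y)$ is the hom-category. Opcomma object of $p$ along itself: an object $b\uparrow_p b$ with 1-cells $\delta^0,\delta^1:b\to b\uparrow_p b$ and a 2-cell $\alpha:\delta^1p\Rightarrow\delta^0p$ such that for every object $y$ the functor $h\mapsto(h\delta^0,h\delta^1,\mathrm{id}_h\ast\alpha)$, $\xi\mapsto(\xi\ast\mathrm{id}_{\delta^0},\xi\ast\mathrm{id}_{\delta^1})$ is an isomorphism from $\mathbb{A}(b\uparrow_p b,y)$ onto the category of triples $(h_0,h_1:b\to y,\ \beta:h_1p\Rightarrow h_0p)$ with morphisms pairs of 2-cells $(\xi_0:h_0\Rightarrow h_0',\xi_1:h_1\Rightarrow h_1')$ satisfying $(\xi_0\ast\mathrm{id}_p)\cdot\beta=\beta'\cdot(\xi_1\ast\mathrm{id}_p)$. Two-dimensional pushout of a span $f_0:c\to c_0$, $f_1:c\to c_1$: an object $P$ with $q_0:c_0\to P$, $q_1:c_1\to P$, $q_0f_0=q_1f_1$, such that for every $y$, $k\mapsto(kq_0,kq_1)$ is an isomorphism from $\mathbb{A}(P,y)$ onto the category of pairs $(k_0,k_1)$ with $k_0f_0=k_1f_1$, whose morphisms are pairs of 2-cells $(\xi_0,\xi_1)$ with $\xi_0\ast\mathrm{id}_{f_0}=\xi_1\ast\mathrm{id}_{f_1}$. $\mathbb{A}$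 has the two-dimensional cokernel diagram of $p$ if it has an opcomma object $b\uparrow_p b$ of $p$ along itself and a two-dimensional pushout $b\uparrow_pb\uparrow_pb$ of the span $(\delta^0,\delta^1)$, with 1-cells $D^0,D^2$ satisfying $D^2\delta^0=D^0\delta^1$. Then $D^1$ is the unique 1-cell with $D^1\delta^1=D^2\delta^1$, $D^1\delta^0=D^0\delta^0$, $\mathrm{id}_{D^1}\ast\alpha=(\mathrm{id}_{D^0}\ast\alpha)\cdot(\mathrm{id}_{D^2}\ast\alpha)$, and $s^0:b\uparrow_pb\to b$ is the unique 1-cell with $s^0\delta^0=s^0\delta^1=\mathrm{id}_b$, $\mathrm{id}_{s^0}\ast\alpha=\mathrm{id}_p$. $\mathrm{Desc}_p(x)$ (the lax descent category of $\mathbb{A}(x,-)$ applied to the two-dimensional cokernel diagram of $p$): objects are pairs $(h:x\to b,\ \beta:\delta^1h\Rightarrow\delta^0h)$ with $(\mathrm{id}_{D^0}\ast\beta)\cdot(\mathrm{id}_{D^2}\ast\beta)=\mathrm{id}_{D^1}\ast\beta$ and $\mathrm{id}_{s^0}\ast\beta=\mathrm{id}_h$; morphisms $(h_1,\beta_1)\to(h_0,\beta_0)$ are 2-cells $\xi:h_1\Rightarrow h_0$ with $\beta_0\cdot(\mathrm{id}_{\delta^1}\ast\xi)=(\mathrm{id}_{\delta^0}\ast\xi)\cdot\beta_1$. Right Kan extension of $f:z\to y$ along $g:z\to w$: a pair $(r:w\to y,\gamma:rg\Rightarrow f)$ such that for each $k:w\to y$, $\beta\mapsto\gamma\cdot(\beta\ast\mathrm{id}_g)$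 is a bijection from 2-cells $k\Rightarrow r$ to 2-cells $kg\Rightarrow f$; a 1-cell $d$ preserves it if $(dr,\mathrm{id}_d\ast\gamma)$ is a right Kan extension of $df$ along $g$. Codensity monad $\mathsf{T}=(b,t,m,\eta)$ of $p$: $(t,\gamma)$ a right Kan extension of $p$ along $p$, $m:tt\Rightarrow t$ unique with $\gamma\cdot(m\ast\mathrm{id}_p)=\gamma\cdot(\mathrm{id}_t\ast\gamma)$, $\eta:\mathrm{id}_b\Rightarrow t$ unique with $\gamma\cdot(\eta\ast\mathrm{id}_p)=\mathrm{id}_p$. $\mathrm{Alg}_{\mathsf{T}}(x)$ (Eilenberg–Moore category of the monad $\mathbb{A}(x,\mathsf{T})$ on $\mathbb{A}(x,b)$): objects are pairs $(h:x\to b,\ \beta:th\Rightarrow h)$ with $\beta\cdot(\mathrm{id}_t\ast\beta)=\beta\cdot(m\ast\mathrm{id}_h)$ and $\beta\cdot(\eta\ast\mathrm{id}_h)=\mathrm{id}_h$; morphisms $(h_1,\beta_1)\to(h_0,\beta_0)$ are 2-cells $\xi:h_1\Rightarrow h_0$ with $\xi\cdot\beta_1=\beta_0\cdot(\mathrm{id}_t\ast\xi)$. *)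

theory Defs
  imports Main
begin

text \<open>A 2-category with objects of type 'o, 1-cells of type 'a and 2-cells of type 'c,
  each sort carved out by a carrier set. comp1 g f is the juxtaposition g f (first f, then g);
  vcomp is vertical composition (written with a centered dot), hcomp is horizontal composition
  (written with a star); idn2 f is the identity 2-cell on f.\<close>

record ('o,'a,'c) two_cat =
  tc_obj :: "'o set"
  tc_ar1 :: "'a set"
  tc_ar2 :: "'c set"
  src1 :: "'a \<Rightarrow> 'o"
  tgt1 :: "'a \<Rightarrow> 'o"
  src2 :: "'c \<Rightarrow> 'a"
  tgt2 :: "'c \<Rightarrow> 'a"
  idn1 :: "'o \<Rightarrow> 'a"
  idn2 :: "'a \<Rightarrow> 'c"
  comp1 :: "'a \<Rightarrow> 'a \<Rightarrow> 'a"
  vcomp :: "'c \<Rightarrow> 'c \<Rightarrow> 'c"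
  hcomp :: "'c \<Rightarrow> 'c \<Rightarrow> 'c"

record ('ob,'ar) cat =
  cobj :: "'ob set"
  carr :: "'ar set"
  cdom :: "'ar \<Rightarrow> 'ob"
  ccod :: "'ar \<Rightarrow> 'ob"
  ccomp :: "'ar \<Rightarrow> 'ar \<Rightarrow> 'ar"
  cid :: "'ob \<Rightarrow> 'ar"

definition is_functor ::
  "('o1,'a1) cat \<Rightarrow> ('o2,'a2) cat \<Rightarrow> ('o1 \<Rightarrow> 'o2) \<times> ('a1 \<Rightarrow> 'a2) \<Rightarrow> bool" where
  "is_functor C D F \<longleftrightarrow>
     (\<forall>ob\<in>cobj C. fst F ob \<in> cobj D) \<and>
     (\<forall>a\<in>carr C. snd F a \<in> carr D \<and> cdom D (snd F a) = fst F (cdom C a)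
                 \<and> ccod D (snd F a) = fst F (ccod C a)) \<and>
     (\<forall>a\<in>carr C. \<forall>a'\<in>carr C. ccod C a = cdom C a' \<longrightarrow>
         snd F (ccomp C a' a) = ccomp D (snd F a') (snd F a)) \<and>
     (\<forall>ob\<in>cobj C. snd F (cid C ob) = cid D (fst F ob))"

definition fcomp :: "('o2 \<Rightarrow> 'o3) \<times> ('a2 \<Rightarrow> 'a3) \<Rightarrow> ('o1 \<Rightarrow> 'o2) \<times> ('a1 \<Rightarrow> 'a2)
    \<Rightarrow> ('o1 \<Rightarrow> 'o3) \<times> ('a1 \<Rightarrow> 'a3)" where
  "fcomp G F = (fst G \<circ> fst F, snd G \<circ> snd F)"

definition fun_eq :: "('o1,'a1) cat \<Rightarrow> ('o1 \<Rightarrow> 'o2) \<times> ('a1 \<Rightarrow> 'a2)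
    \<Rightarrow> ('o1 \<Rightarrow> 'o2) \<times> ('a1 \<Rightarrow> 'a2) \<Rightarrow> bool" where
  "fun_eq C F G \<longleftrightarrow> (\<forall>ob\<in>cobj C. fst F ob = fst G ob) \<and> (\<forall>a\<in>carr C. snd F a = snd G a)"

definition cat_iso ::
  "('o1,'a1) cat \<Rightarrow> ('o2,'a2) cat \<Rightarrow> ('o1 \<Rightarrow> 'o2) \<times> ('a1 \<Rightarrow> 'a2) \<Rightarrow> bool" where
  "cat_iso C D F \<longleftrightarrow> is_functor C D F \<and>
     (\<exists>G. is_functor D C G \<and> fun_eq C (fcomp G F) (id, id) \<and> fun_eq D (fcomp F G) (id, id))"

locale TC =
  fixes A :: "('o,'a,'c) two_cat"
begin

abbreviation "Ob \<equiv> tc_obj A"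
abbreviation "Ar1 \<equiv> tc_ar1 A"
abbreviation "Ar2 \<equiv> tc_ar2 A"
abbreviation "s1 \<equiv> src1 A"
abbreviation "t1 \<equiv> tgt1 A"
abbreviation "s2 \<equiv> src2 A"
abbreviation "t2 \<equiv> tgt2 A"
abbreviation "i1 \<equiv> idn1 A"
abbreviation "i2 \<equiv> idn2 A"
abbreviation cmp1 (infixr "\<odot>" 75) where "g \<odot> f \<equiv> comp1 A g f"
abbreviation vcmp (infixr "\<cdot>" 70) where "\<beta> \<cdot> \<alpha> \<equiv> vcomp A \<beta> \<alpha>"
abbreviation hcmp (infixr "\<star>" 80) where "\<beta> \<star> \<alpha> \<equiv> hcomp A \<beta> \<alpha>"

abbreviation is_1cell where "is_1cell f x y \<equiv> f \<in> Ar1 \<and> s1 f = x \<and> t1 f = y"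
abbreviation is_2cell where "is_2cell \<theta> f g \<equiv> \<theta> \<in> Ar2 \<and> s2 \<theta> = f \<and> t2 \<theta> = g"

definition homcat :: "'o \<Rightarrow> 'o \<Rightarrow> ('a,'c) cat" where
  "homcat x y = \<lparr> cobj = {f. is_1cell f x y},
                  carr = {\<theta>\<in>Ar2. is_1cell (s2 \<theta>) x y \<and> is_1cell (t2 \<theta>) x y},
                  cdom = s2, ccod = t2, ccomp = vcomp A, cid = i2 \<rparr>"

end

locale two_category = TC +
  assumes id1_ar: "x \<in> Ob \<Longrightarrow> is_1cell (i1 x) x x"
  and ar1_ends: "f \<in> Ar1 \<Longrightarrow> s1 f \<in> Ob \<and> t1 f \<in> Ob"
  and comp1_ar: "\<lbrakk>f \<in> Ar1; g \<in> Ar1; t1 f = s1 g\<rbrakk> \<Longrightarrow> is_1cell (g \<odot> f) (s1 f) (t1 g)"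
  and comp1_assoc: "\<lbrakk>f \<in> Ar1; g \<in> Ar1; h \<in> Ar1; t1 f = s1 g; t1 g = s1 h\<rbrakk>
                      \<Longrightarrow> (h \<odot> g) \<odot> f = h \<odot> (g \<odot> f)"
  and comp1_idl: "f \<in> Ar1 \<Longrightarrow> i1 (t1 f) \<odot> f = f"
  and comp1_idr: "f \<in> Ar1 \<Longrightarrow> f \<odot> i1 (s1 f) = f"
  and ar2_ends: "\<theta> \<in> Ar2 \<Longrightarrow> s2 \<theta> \<in> Ar1 \<and> t2 \<theta> \<in> Ar1 \<and>
                   s1 (s2 \<theta>) = s1 (t2 \<theta>) \<and> t1 (s2 \<theta>) = t1 (t2 \<theta>)"
  and id2_ar: "f \<in> Ar1 \<Longrightarrow> is_2cell (i2 f) f f"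
  and vcomp_ar: "\<lbrakk>\<theta> \<in> Ar2; \<phi> \<in> Ar2; t2 \<theta> = s2 \<phi>\<rbrakk> \<Longrightarrow> is_2cell (\<phi> \<cdot> \<theta>) (s2 \<theta>) (t2 \<phi>)"
  and vcomp_assoc: "\<lbrakk>\<theta> \<in> Ar2; \<phi> \<in> Ar2; \<psi> \<in> Ar2; t2 \<theta> = s2 \<phi>; t2 \<phi> = s2 \<psi>\<rbrakk>
                      \<Longrightarrow> (\<psi> \<cdot> \<phi>) \<cdot> \<theta> = \<psi> \<cdot> (\<phi> \<cdot> \<theta>)"
  and vcomp_idl: "\<theta> \<in> Ar2 \<Longrightarrow> i2 (t2 \<theta>) \<cdot> \<theta> = \<theta>"
  and vcomp_idr: "\<theta> \<in> Ar2 \<Longrightarrow> \<theta> \<cdot> i2 (s2 \<theta>) = \<theta>"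
  and hcomp_ar: "\<lbrakk>\<theta> \<in> Ar2; \<phi> \<in> Ar2; t1 (s2 \<theta>) = s1 (s2 \<phi>)\<rbrakk>
                   \<Longrightarrow> is_2cell (\<phi> \<star> \<theta>) (s2 \<phi> \<odot> s2 \<theta>) (t2 \<phi> \<odot> t2 \<theta>)"
  and hcomp_assoc: "\<lbrakk>\<theta> \<in> Ar2; \<phi> \<in> Ar2; \<psi> \<in> Ar2; t1 (s2 \<theta>) = s1 (s2 \<phi>);
                      t1 (s2 \<phi>) = s1 (s2 \<psi>)\<rbrakk> \<Longrightarrow> (\<psi> \<star> \<phi>) \<star> \<theta> = \<psi> \<star> (\<phi> \<star> \<theta>)"
  and hcomp_idl: "\<theta> \<in> Ar2 \<Longrightarrow> i2 (i1 (t1 (s2 \<theta>))) \<star> \<theta> = \<theta>"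
  and hcomp_idr: "\<theta> \<in> Ar2 \<Longrightarrow> \<theta> \<star> i2 (i1 (s1 (s2 \<theta>))) = \<theta>"
  and hcomp_id2: "\<lbrakk>f \<in> Ar1; g \<in> Ar1; t1 f = s1 g\<rbrakk> \<Longrightarrow> i2 g \<star> i2 f = i2 (g \<odot> f)"
  and interchange: "\<lbrakk>\<theta> \<in> Ar2; \<theta>' \<in> Ar2; \<phi> \<in> Ar2; \<phi>' \<in> Ar2; t2 \<theta> = s2 \<theta>'; t2 \<phi> = s2 \<phi>';
                      t1 (s2 \<theta>) = s1 (s2 \<phi>)\<rbrakk>
                      \<Longrightarrow> (\<phi>' \<cdot> \<phi>) \<star> (\<theta>' \<cdot> \<theta>) = (\<phi>' \<star> \<theta>') \<cdot> (\<phi> \<star> \<theta>)"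

context TC
begin

section \<open>Opcomma object of p along itself\<close>

text \<open>The category of triples (h0, h1 : b \<rightarrow> y, beta : h1 p \<Rightarrow> h0 p); a morphism is
  recorded together with its source and target objects.\<close>

definition triples :: "'a \<Rightarrow> 'o \<Rightarrow> 'o \<Rightarrow>
    ('a \<times> 'a \<times> 'c, ('a \<times> 'a \<times> 'c) \<times> ('c \<times> 'c) \<times> ('a \<times> 'a \<times> 'c)) cat" where
  "triples p b y = \<lparr>
     cobj = {(h0, h1, \<beta>). is_1cell h0 b y \<and> is_1cell h1 b y \<and> is_2cell \<beta> (h1 \<odot> p) (h0 \<odot> p)},
     carr = {((h0, h1, \<beta>), (\<xi>0, \<xi>1), (h0', h1', \<beta>')).
               is_1cell h0 b y \<and> is_1cell h1 b y \<and> is_2cell \<beta> (h1 \<odot> p) (h0 \<odot> p) \<and>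
               is_1cell h0' b y \<and> is_1cell h1' b y \<and> is_2cell \<beta>' (h1' \<odot> p) (h0' \<odot> p) \<and>
               is_2cell \<xi>0 h0 h0' \<and> is_2cell \<xi>1 h1 h1' \<and>
               (\<xi>0 \<star> i2 p) \<cdot> \<beta> = \<beta>' \<cdot> (\<xi>1 \<star> i2 p)},
     cdom = fst, ccod = (\<lambda>a. snd (snd a)),
     ccomp = (\<lambda>(ob1', (\<xi>0', \<xi>1'), ob2') (ob1, (\<xi>0, \<xi>1), ob2). (ob1, (\<xi>0' \<cdot> \<xi>0, \<xi>1' \<cdot> \<xi>1), ob2')),
     cid = (\<lambda>(h0, h1, \<beta>). ((h0, h1, \<beta>), (i2 h0, i2 h1), (h0, h1, \<beta>))) \<rparr>"

definition opc_functor where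
  "opc_functor d0 d1 \<alpha> =
     ((\<lambda>h. (h \<odot> d0, h \<odot> d1, i2 h \<star> \<alpha>)),
      (\<lambda>\<xi>. ((s2 \<xi> \<odot> d0, s2 \<xi> \<odot> d1, i2 (s2 \<xi>) \<star> \<alpha>), (\<xi> \<star> i2 d0, \<xi> \<star> i2 d1),
            (t2 \<xi> \<odot> d0, t2 \<xi> \<odot> d1, i2 (t2 \<xi>) \<star> \<alpha>))))"

definition is_opcomma :: "'o \<Rightarrow> 'o \<Rightarrow> 'a \<Rightarrow> 'o \<Rightarrow> 'a \<Rightarrow> 'a \<Rightarrow> 'c \<Rightarrow> bool" where
  "is_opcomma e b p B d0 d1 \<alpha> \<longleftrightarrow>
     is_1cell p e b \<and> B \<in> Ob \<and> is_1cell d0 b B \<and> is_1cell d1 b B \<and>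
     is_2cell \<alpha> (d1 \<odot> p) (d0 \<odot> p) \<and>
     (\<forall>y\<in>Ob. cat_iso (homcat B y) (triples p b y) (opc_functor d0 d1 \<alpha>))"

definition cocones :: "'o \<Rightarrow> 'o \<Rightarrow> 'a \<Rightarrow> 'a \<Rightarrow> 'o \<Rightarrow>
    ('a \<times> 'a, ('a \<times> 'a) \<times> ('c \<times> 'c) \<times> ('a \<times> 'a)) cat" where
  "cocones c0 c1 f0 f1 y = \<lparr>
     cobj = {(k0, k1). is_1cell k0 c0 y \<and> is_1cell k1 c1 y \<and> k0 \<odot> f0 = k1 \<odot> f1},
     carr = {((k0, k1), (\<xi>0, \<xi>1), (k0', k1')).
               is_1cell k0 c0 y \<and> is_1cell k1 c1 y \<and> k0 \<odot> f0 = k1 \<odot> f1 \<and>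
               is_1cell k0' c0 y \<and> is_1cell k1' c1 y \<and> k0' \<odot> f0 = k1' \<odot> f1 \<and>
               is_2cell \<xi>0 k0 k0' \<and> is_2cell \<xi>1 k1 k1' \<and> \<xi>0 \<star> i2 f0 = \<xi>1 \<star> i2 f1},
     cdom = fst, ccod = (\<lambda>a. snd (snd a)),
     ccomp = (\<lambda>(ob1', (\<xi>0', \<xi>1'), ob2') (ob1, (\<xi>0, \<xi>1), ob2). (ob1, (\<xi>0' \<cdot> \<xi>0, \<xi>1' \<cdot> \<xi>1), ob2')),
     cid = (\<lambda>(k0, k1). ((k0, k1), (i2 k0, i2 k1), (k0, k1))) \<rparr>"

definition po_functor where
  "po_functor q0 q1 =
     ((\<lambda>k. (k \<odot> q0, k \<odot> q1)),
      (\<lambda>\<xi>. ((s2 \<xi> \<odot> q0, s2 \<xi> \<odot> q1), (\<xi> \<star> i2 q0, \<xi> \<star> i2 q1), (t2 \<xi> \<odot> q0, t2 \<xi> \<odot> q1))))"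

definition is_2pushout :: "'o \<Rightarrow> 'o \<Rightarrow> 'o \<Rightarrow> 'a \<Rightarrow> 'a \<Rightarrow> 'o \<Rightarrow> 'a \<Rightarrow> 'a \<Rightarrow> bool" where
  "is_2pushout c c0 c1 f0 f1 P q0 q1 \<longleftrightarrow>
     is_1cell f0 c c0 \<and> is_1cell f1 c c1 \<and> P \<in> Ob \<and> is_1cell q0 c0 P \<and> is_1cell q1 c1 P \<and>
     q0 \<odot> f0 = q1 \<odot> f1 \<and>
     (\<forall>y\<in>Ob. cat_iso (homcat P y) (cocones c0 c1 f0 f1 y) (po_functor q0 q1))"

section \<open>The two-dimensional cokernel diagram of p\<close>

text \<open>B = b\<up>_p b with d0, d1, alpha; P = b\<up>_p b\<up>_p b with D0, D2 (D2 d0 = D0 d1);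
  D1 and s0 the induced 1-cells.\<close>
definition is_cokernel_diagram where
  "is_cokernel_diagram e b p B d0 d1 \<alpha> P D0 D1 D2 s0 \<longleftrightarrow>
     is_opcomma e b p B d0 d1 \<alpha> \<and>
     is_2pushout b B B d0 d1 P D2 D0 \<and>
     is_1cell D1 B P \<and> D1 \<odot> d1 = D2 \<odot> d1 \<and> D1 \<odot> d0 = D0 \<odot> d0 \<and>
     i2 D1 \<star> \<alpha> = (i2 D0 \<star> \<alpha>) \<cdot> (i2 D2 \<star> \<alpha>) \<and>
     is_1cell s0 B b \<and> s0 \<odot> d0 = i1 b \<and> s0 \<odot> d1 = i1 b \<and> i2 s0 \<star> \<alpha> = i2 p"

section \<open>Right Kan extensions and the codensity monad\<close>

definition is_ran :: "'a \<Rightarrow> 'a \<Rightarrow> 'a \<Rightarrow> 'c \<Rightarrow> bool" where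
  "is_ran g f r \<gamma> \<longleftrightarrow>
     f \<in> Ar1 \<and> g \<in> Ar1 \<and> s1 f = s1 g \<and> is_1cell r (t1 g) (t1 f) \<and>
     is_2cell \<gamma> (r \<odot> g) f \<and>
     (\<forall>k. is_1cell k (t1 g) (t1 f) \<longrightarrow>
        bij_betw (\<lambda>\<beta>. \<gamma> \<cdot> (\<beta> \<star> i2 g)) {\<beta>. is_2cell \<beta> k r} {\<theta>. is_2cell \<theta> (k \<odot> g) f})"

definition preserves_ran :: "'a \<Rightarrow> 'a \<Rightarrow> 'a \<Rightarrow> 'a \<Rightarrow> 'c \<Rightarrow> bool" where
  "preserves_ran d g f r \<gamma> \<longleftrightarrow> d \<in> Ar1 \<and> s1 d = t1 f \<and> is_ran g (d \<odot> f) (d \<odot> r) (i2 d \<star> \<gamma>)"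

definition is_codensity_monad where
  "is_codensity_monad b p t \<gamma> m \<eta> \<longleftrightarrow>
     is_ran p p t \<gamma> \<and>
     is_2cell m (t \<odot> t) t \<and> \<gamma> \<cdot> (m \<star> i2 p) = \<gamma> \<cdot> (i2 t \<star> \<gamma>) \<and>
     is_2cell \<eta> (i1 b) t \<and> \<gamma> \<cdot> (\<eta> \<star> i2 p) = i2 p"

section \<open>Desc_p(x) and Alg_T(x)\<close>

definition Desc :: "'o \<Rightarrow> 'a \<Rightarrow> 'a \<Rightarrow> 'a \<Rightarrow> 'a \<Rightarrow> 'a \<Rightarrow> 'a \<Rightarrow> 'o \<Rightarrow>
    ('a \<times> 'c, ('a \<times> 'c) \<times> 'c \<times> ('a \<times> 'c)) cat" where
  "Desc b d0 d1 D0 D1 D2 s0 x =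
    (let Obs = {(h, \<beta>). is_1cell h x b \<and> is_2cell \<beta> (d1 \<odot> h) (d0 \<odot> h) \<and>
                       (i2 D0 \<star> \<beta>) \<cdot> (i2 D2 \<star> \<beta>) = i2 D1 \<star> \<beta> \<and> i2 s0 \<star> \<beta> = i2 h}
     in \<lparr> cobj = Obs,
          carr = {((h1, \<beta>1), \<xi>, (h0, \<beta>0)). (h1, \<beta>1) \<in> Obs \<and> (h0, \<beta>0) \<in> Obs \<and>
                    is_2cell \<xi> h1 h0 \<and> \<beta>0 \<cdot> (i2 d1 \<star> \<xi>) = (i2 d0 \<star> \<xi>) \<cdot> \<beta>1},
          cdom = fst, ccod = (\<lambda>a. snd (snd a)),
          ccomp = (\<lambda>(ob1', \<xi>', ob0') (ob1, \<xi>, ob0). (ob1, \<xi>' \<cdot> \<xi>, ob0')),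
          cid = (\<lambda>ob. (ob, i2 (fst ob), ob)) \<rparr>)"

definition Alg :: "'o \<Rightarrow> 'a \<Rightarrow> 'c \<Rightarrow> 'c \<Rightarrow> 'o \<Rightarrow>
    ('a \<times> 'c, ('a \<times> 'c) \<times> 'c \<times> ('a \<times> 'c)) cat" where
  "Alg b t m \<eta> x =
    (let Obs = {(h, \<beta>). is_1cell h x b \<and> is_2cell \<beta> (t \<odot> h) h \<and>
                       \<beta> \<cdot> (i2 t \<star> \<beta>) = \<beta> \<cdot> (m \<star> i2 h) \<and> \<beta> \<cdot> (\<eta> \<star> i2 h) = i2 h}
     in \<lparr> cobj = Obs,
          carr = {((h1, \<beta>1), \<xi>, (h0, \<beta>0)). (h1, \<beta>1) \<in> Obs \<and> (h0, \<beta>0) \<in> Obs \<and>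
                    is_2cell \<xi> h1 h0 \<and> \<xi> \<cdot> \<beta>1 = \<beta>0 \<cdot> (i2 t \<star> \<xi>)},
          cdom = fst, ccod = (\<lambda>a. snd (snd a)),
          ccomp = (\<lambda>(ob1', \<xi>', ob0') (ob1, \<xi>, ob0). (ob1, \<xi>' \<cdot> \<xi>, ob0')),
          cid = (\<lambda>ob. (ob, i2 (fst ob), ob)) \<rparr>)"

text \<open>Comparison functors K (with K^H = Kfun p alpha, K^T = Kfun p gamma) from A(x,e).\<close>
definition Kfun :: "'a \<Rightarrow> 'c \<Rightarrow> ('a \<Rightarrow> 'a \<times> 'c) \<times> ('c \<Rightarrow> ('a \<times> 'c) \<times> 'c \<times> ('a \<times> 'c))" where
  "Kfun p \<beta> = ((\<lambda>g. (p \<odot> g, \<beta> \<star> i2 g)),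
               (\<lambda>\<chi>. ((p \<odot> s2 \<chi>, \<beta> \<star> i2 (s2 \<chi>)), i2 p \<star> \<chi>, (p \<odot> t2 \<chi>, \<beta> \<star> i2 (t2 \<chi>)))))"

text \<open>Precomposition with a 1-cell f : x' \<rightarrow> x, as a functor Desc(x) \<rightarrow> Desc(x')
  (resp. Alg(x) \<rightarrow> Alg(x')), and with a 2-cell theta : f \<Rightarrow> f', as the component at an
  object (h, beta) of the induced natural transformation.\<close>
definition precomp1 :: "'a \<Rightarrow> ('a \<times> 'c \<Rightarrow> 'a \<times> 'c) \<times>
    (('a \<times> 'c) \<times> 'c \<times> ('a \<times> 'c) \<Rightarrow> ('a \<times> 'c) \<times> 'c \<times> ('a \<times> 'c))" where
  "precomp1 f = ((\<lambda>(h, \<beta>). (h \<odot> f, \<beta> \<star> i2 f)),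
                 (\<lambda>((h1, \<beta>1), \<xi>, (h0, \<beta>0)). ((h1 \<odot> f, \<beta>1 \<star> i2 f), \<xi> \<star> i2 f, (h0 \<odot> f, \<beta>0 \<star> i2 f))))"

definition precomp2 :: "'c \<Rightarrow> 'a \<times> 'c \<Rightarrow> ('a \<times> 'c) \<times> 'c \<times> ('a \<times> 'c)" where
  "precomp2 \<theta> = (\<lambda>(h, \<beta>). ((h \<odot> s2 \<theta>, \<beta> \<star> i2 (s2 \<theta>)), i2 h \<star> \<theta>, (h \<odot> t2 \<theta>, \<beta> \<star> i2 (t2 \<theta>))))"

end

text \<open>Forgetful functor (h, beta) \<mapsto> h, xi \<mapsto> xi (same for U^H and U^T).\<close>
definition forget :: "('a \<times> 'c \<Rightarrow> 'a) \<times> (('a \<times> 'c) \<times> 'c \<times> ('a \<times> 'c) \<Rightarrow> 'c)" where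
  "forget = (fst, (\<lambda>a. fst (snd a)))"

end

theory Submission
  imports Defs
begin


lemma iso_obj:
  assumes "cat_iso C D F" "ob \<in> cobj D"
  shows "\<exists>c\<in>cobj C. fst F c = ob"
proof -
  obtain G where G: "is_functor D C G" "fun_eq D (fcomp F G) (id, id)"
    using assms(1) unfolding cat_iso_def by blast
  have "fst G ob \<in> cobj C" using G(1) assms(2) unfolding is_functor_def by blast
  moreover have "fst F (fst G ob) = ob" using G(2) assms(2) unfolding fun_eq_def fcomp_def by auto
  ultimately show ?thesis by blast
qed

lemma iso_arr:
  assumes "cat_iso C D F" "a \<in> carr D" "c \<in> cobj C" "c' \<in> cobj C"
    "cdom D a = fst F c" "ccod D a = fst F c'"
  shows "\<exists>\<sigma>\<in>carr C. snd F \<sigma> = a \<and> cdom C \<sigma> = c \<and> ccod C \<sigma> = c'"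
proof -
  obtain G where G: "is_functor D C G" "fun_eq D (fcomp F G) (id, id)" "fun_eq C (fcomp G F) (id, id)"
    using assms(1) unfolding cat_iso_def by blast
  have 1: "snd G a \<in> carr C" "cdom C (snd G a) = fst G (cdom D a)" "ccod C (snd G a) = fst G (ccod D a)"
    using G(1) assms(2) unfolding is_functor_def by blast+
  have 2: "snd F (snd G a) = a" using G(2) assms(2) unfolding fun_eq_def fcomp_def by auto
  have 3: "fst G (fst F c) = c" "fst G (fst F c') = c'"
    using G(3) assms(3,4) unfolding fun_eq_def fcomp_def by auto
  show ?thesis using 1 2 3 assms(5,6) by metis
qed

context two_category
begin

lemma ty1:
  "\<lbrakk>f \<in> Ar1; g \<in> Ar1; t1 f = s1 g\<rbrakk> \<Longrightarrow> g \<odot> f \<in> Ar1"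
  "\<lbrakk>f \<in> Ar1; g \<in> Ar1; t1 f = s1 g\<rbrakk> \<Longrightarrow> s1 (g \<odot> f) = s1 f"
  "\<lbrakk>f \<in> Ar1; g \<in> Ar1; t1 f = s1 g\<rbrakk> \<Longrightarrow> t1 (g \<odot> f) = t1 g"
  "x \<in> Ob \<Longrightarrow> i1 x \<in> Ar1"
  "x \<in> Ob \<Longrightarrow> s1 (i1 x) = x"
  "x \<in> Ob \<Longrightarrow> t1 (i1 x) = x"
  "f \<in> Ar1 \<Longrightarrow> i2 f \<in> Ar2"
  "f \<in> Ar1 \<Longrightarrow> s2 (i2 f) = f"
  "f \<in> Ar1 \<Longrightarrow> t2 (i2 f) = f"
  "\<lbrakk>\<theta> \<in> Ar2; \<phi> \<in> Ar2; t2 \<theta> = s2 \<phi>\<rbrakk> \<Longrightarrow> \<phi> \<cdot> \<theta> \<in> Ar2"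
  "\<lbrakk>\<theta> \<in> Ar2; \<phi> \<in> Ar2; t2 \<theta> = s2 \<phi>\<rbrakk> \<Longrightarrow> s2 (\<phi> \<cdot> \<theta>) = s2 \<theta>"
  "\<lbrakk>\<theta> \<in> Ar2; \<phi> \<in> Ar2; t2 \<theta> = s2 \<phi>\<rbrakk> \<Longrightarrow> t2 (\<phi> \<cdot> \<theta>) = t2 \<phi>"
  "\<lbrakk>\<theta> \<in> Ar2; \<phi> \<in> Ar2; t1 (s2 \<theta>) = s1 (s2 \<phi>)\<rbrakk> \<Longrightarrow> \<phi> \<star> \<theta> \<in> Ar2"
  "\<lbrakk>\<theta> \<in> Ar2; \<phi> \<in> Ar2; t1 (s2 \<theta>) = s1 (s2 \<phi>)\<rbrakk> \<Longrightarrow> s2 (\<phi> \<star> \<theta>) = s2 \<phi> \<odot> s2 \<theta>"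
  "\<lbrakk>\<theta> \<in> Ar2; \<phi> \<in> Ar2; t1 (s2 \<theta>) = s1 (s2 \<phi>)\<rbrakk> \<Longrightarrow> t2 (\<phi> \<star> \<theta>) = t2 \<phi> \<odot> t2 \<theta>"
  "\<theta> \<in> Ar2 \<Longrightarrow> s2 \<theta> \<in> Ar1"
  "\<theta> \<in> Ar2 \<Longrightarrow> t2 \<theta> \<in> Ar1"
  "\<theta> \<in> Ar2 \<Longrightarrow> s1 (t2 \<theta>) = s1 (s2 \<theta>)"
  "\<theta> \<in> Ar2 \<Longrightarrow> t1 (t2 \<theta>) = t1 (s2 \<theta>)"
  "\<lbrakk>f \<in> Ar1; g \<in> Ar1; h \<in> Ar1; t1 f = s1 g; t1 g = s1 h\<rbrakk> \<Longrightarrow> (h \<odot> g) \<odot> f = h \<odot> (g \<odot> f)"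
  "\<lbrakk>f \<in> Ar1; t1 f = y\<rbrakk> \<Longrightarrow> i1 y \<odot> f = f"
  "\<lbrakk>f \<in> Ar1; s1 f = x\<rbrakk> \<Longrightarrow> f \<odot> i1 x = f"
  using comp1_ar id1_ar id2_ar vcomp_ar hcomp_ar ar2_ends comp1_assoc comp1_idl comp1_idr
  by (auto)

lemma ty2:
  "\<lbrakk>\<theta> \<in> Ar2; t2 \<theta> = g\<rbrakk> \<Longrightarrow> i2 g \<cdot> \<theta> = \<theta>"
  "\<lbrakk>\<theta> \<in> Ar2; s2 \<theta> = f\<rbrakk> \<Longrightarrow> \<theta> \<cdot> i2 f = \<theta>"
  "\<lbrakk>\<theta> \<in> Ar2; t1 (s2 \<theta>) = y\<rbrakk> \<Longrightarrow> i2 (i1 y) \<star> \<theta> = \<theta>"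
  "\<lbrakk>\<theta> \<in> Ar2; s1 (s2 \<theta>) = x\<rbrakk> \<Longrightarrow> \<theta> \<star> i2 (i1 x) = \<theta>"
  "\<lbrakk>f \<in> Ar1; g \<in> Ar1; t1 f = s1 g\<rbrakk> \<Longrightarrow> i2 g \<star> i2 f = i2 (g \<odot> f)"
  using vcomp_idl vcomp_idr hcomp_idl hcomp_idr hcomp_id2 by blast+

lemmas ty = ty1 ty2

lemma vassoc:
  "\<lbrakk>\<theta> \<in> Ar2; \<phi> \<in> Ar2; \<psi> \<in> Ar2; t2 \<theta> = s2 \<phi>; t2 \<phi> = s2 \<psi>\<rbrakk> \<Longrightarrow> (\<psi> \<cdot> \<phi>) \<cdot> \<theta> = \<psi> \<cdot> (\<phi> \<cdot> \<theta>)"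
  by (rule vcomp_assoc)

lemma wl_v:
  assumes "\<theta> \<in> Ar2" "\<phi> \<in> Ar2" "t2 \<theta> = s2 \<phi>" "h \<in> Ar1" "t1 (s2 \<theta>) = s1 h"
  shows "i2 h \<star> (\<phi> \<cdot> \<theta>) = (i2 h \<star> \<phi>) \<cdot> (i2 h \<star> \<theta>)"
proof -
  have "i2 h \<star> (\<phi> \<cdot> \<theta>) = (i2 h \<cdot> i2 h) \<star> (\<phi> \<cdot> \<theta>)" using assms by (simp add: ty)
  also have "\<dots> = (i2 h \<star> \<phi>) \<cdot> (i2 h \<star> \<theta>)" using assms by (intro interchange) (simp_all add: ty)
  finally show ?thesis .
qed

lemma wr_v:
  assumes "\<theta> \<in> Ar2" "\<phi> \<in> Ar2" "t2 \<theta> = s2 \<phi>" "h \<in> Ar1" "t1 h = s1 (s2 \<theta>)"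
  shows "(\<phi> \<cdot> \<theta>) \<star> i2 h = (\<phi> \<star> i2 h) \<cdot> (\<theta> \<star> i2 h)"
proof -
  have "(\<phi> \<cdot> \<theta>) \<star> i2 h = (\<phi> \<cdot> \<theta>) \<star> (i2 h \<cdot> i2 h)" using assms by (simp add: ty)
  also have "\<dots> = (\<phi> \<star> i2 h) \<cdot> (\<theta> \<star> i2 h)" using assms by (intro interchange) (simp_all add: ty)
  finally show ?thesis .
qed

lemma ww:
  assumes "\<theta> \<in> Ar2" "f \<in> Ar1" "g \<in> Ar1" "t1 g = s1 f" "t1 (s2 \<theta>) = s1 g"
  shows "i2 f \<star> (i2 g \<star> \<theta>) = i2 (f \<odot> g) \<star> \<theta>"
  using assms hcomp_assoc[of \<theta> "i2 g" "i2 f"] by (simp add: ty)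

lemma ww':
  assumes "\<theta> \<in> Ar2" "f \<in> Ar1" "g \<in> Ar1" "t1 g = s1 f" "t1 f = s1 (s2 \<theta>)"
  shows "(\<theta> \<star> i2 f) \<star> i2 g = \<theta> \<star> i2 (f \<odot> g)"
  using assms hcomp_assoc[of "i2 g" "i2 f" \<theta>] by (simp add: ty)

lemma wlr:
  assumes "\<theta> \<in> Ar2" "f \<in> Ar1" "g \<in> Ar1" "t1 g = s1 (s2 \<theta>)" "t1 (s2 \<theta>) = s1 f"
  shows "(i2 f \<star> \<theta>) \<star> i2 g = i2 f \<star> (\<theta> \<star> i2 g)"
  using assms hcomp_assoc[of "i2 g" \<theta> "i2 f"] by (simp add: ty)

lemma ic1:
  assumes "\<theta> \<in> Ar2" "\<phi> \<in> Ar2" "t1 (s2 \<theta>) = s1 (s2 \<phi>)"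
  shows "\<phi> \<star> \<theta> = (\<phi> \<star> i2 (t2 \<theta>)) \<cdot> (i2 (s2 \<phi>) \<star> \<theta>)"
proof -
  have "\<phi> \<star> \<theta> = (\<phi> \<cdot> i2 (s2 \<phi>)) \<star> (i2 (t2 \<theta>) \<cdot> \<theta>)" using assms by (simp add: ty)
  also have "\<dots> = (\<phi> \<star> i2 (t2 \<theta>)) \<cdot> (i2 (s2 \<phi>) \<star> \<theta>)" using assms by (intro interchange) (simp_all add: ty)
  finally show ?thesis .
qed

lemma ic2:
  assumes "\<theta> \<in> Ar2" "\<phi> \<in> Ar2" "t1 (s2 \<theta>) = s1 (s2 \<phi>)"
  shows "\<phi> \<star> \<theta> = (i2 (t2 \<phi>) \<star> \<theta>) \<cdot> (\<phi> \<star> i2 (s2 \<theta>))"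
proof -
  have "\<phi> \<star> \<theta> = (i2 (t2 \<phi>) \<cdot> \<phi>) \<star> (\<theta> \<cdot> i2 (s2 \<theta>))" using assms by (simp add: ty)
  also have "\<dots> = (i2 (t2 \<phi>) \<star> \<theta>) \<cdot> (\<phi> \<star> i2 (s2 \<theta>))" using assms by (intro interchange) (simp_all add: ty)
  finally show ?thesis .
qed

end


locale setting = two_category A for A :: "('o,'a,'c) two_cat" +
  fixes e b B P :: 'o and p d0 d1 D0 D1 D2 s0 t :: 'a and \<alpha> \<gamma> m \<eta> :: 'c
  assumes cok: "is_cokernel_diagram e b p B d0 d1 \<alpha> P D0 D1 D2 s0"
  and ran: "is_ran p p t \<gamma>" and pres: "preserves_ran d0 p p t \<gamma>"
  and cod: "is_codensity_monad b p t \<gamma> m \<eta>"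
begin

lemma opc: "is_opcomma e b p B d0 d1 \<alpha>" using cok unfolding is_cokernel_diagram_def by blast
lemma po: "is_2pushout b B B d0 d1 P D2 D0" using cok unfolding is_cokernel_diagram_def by blast

lemma at1:
  "p \<in> Ar1" "s1 p = e" "t1 p = b" "B \<in> Ob" "P \<in> Ob"
  "d0 \<in> Ar1" "s1 d0 = b" "t1 d0 = B" "d1 \<in> Ar1" "s1 d1 = b" "t1 d1 = B"
  "D0 \<in> Ar1" "s1 D0 = B" "t1 D0 = P" "D1 \<in> Ar1" "s1 D1 = B" "t1 D1 = P"
  "D2 \<in> Ar1" "s1 D2 = B" "t1 D2 = P" "s0 \<in> Ar1" "s1 s0 = B" "t1 s0 = b"
  "t \<in> Ar1" "s1 t = b" "t1 t = b"
  using opc po cok ran unfolding is_opcomma_def is_2pushout_def is_cokernel_diagram_def is_ran_def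
  by auto

lemma at0: "e \<in> Ob" "b \<in> Ob" using ar1_ends at1 by metis+

lemma at2:
  "\<alpha> \<in> Ar2" "s2 \<alpha> = d1 \<odot> p" "t2 \<alpha> = d0 \<odot> p"
  "\<gamma> \<in> Ar2" "s2 \<gamma> = t \<odot> p" "t2 \<gamma> = p"
  "m \<in> Ar2" "s2 m = t \<odot> t" "t2 m = t"
  "\<eta> \<in> Ar2" "s2 \<eta> = i1 b" "t2 \<eta> = t"
  using opc ran cod unfolding is_opcomma_def is_ran_def is_codensity_monad_def by auto

lemma eq1:
  "D2 \<odot> d0 = D0 \<odot> d1" "D1 \<odot> d1 = D2 \<odot> d1" "D1 \<odot> d0 = D0 \<odot> d0"
  "s0 \<odot> d0 = i1 b" "s0 \<odot> d1 = i1 b"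
  using po cok unfolding is_2pushout_def is_cokernel_diagram_def by auto

lemma eq2:
  "i2 D1 \<star> \<alpha> = (i2 D0 \<star> \<alpha>) \<cdot> (i2 D2 \<star> \<alpha>)" "i2 s0 \<star> \<alpha> = i2 p"
  "\<gamma> \<cdot> (m \<star> i2 p) = \<gamma> \<cdot> (i2 t \<star> \<gamma>)" "\<gamma> \<cdot> (\<eta> \<star> i2 p) = i2 p"
  using cok cod unfolding is_cokernel_diagram_def is_codensity_monad_def by auto

lemma opc_iso: "y \<in> Ob \<Longrightarrow> cat_iso (homcat B y) (triples p b y) (opc_functor d0 d1 \<alpha>)"
  using opc unfolding is_opcomma_def by blast

lemma po_iso: "y \<in> Ob \<Longrightarrow> cat_iso (homcat P y) (cocones B B d0 d1 y) (po_functor D2 D0)"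
  using po unfolding is_2pushout_def by blast

lemma ran_inj:
  assumes "is_1cell k b b" "is_2cell \<sigma> k t" "is_2cell \<tau> k t" "\<gamma> \<cdot> (\<sigma> \<star> i2 p) = \<gamma> \<cdot> (\<tau> \<star> i2 p)"
  shows "\<sigma> = \<tau>"
proof -
  have "bij_betw (\<lambda>\<beta>. \<gamma> \<cdot> (\<beta> \<star> i2 p)) {\<beta>. is_2cell \<beta> k t} {\<theta>. is_2cell \<theta> (k \<odot> p) p}"
    using ran assms(1) unfolding is_ran_def by (auto simp: at1)
  then show ?thesis using assms(2-4) unfolding bij_betw_def inj_on_def by blast
qed

lemma pres_surj:
  assumes "is_1cell k b B" "is_2cell \<theta> (k \<odot> p) (d0 \<odot> p)"
  shows "\<exists>\<sigma>. is_2cell \<sigma> k (d0 \<odot> t) \<and> (i2 d0 \<star> \<gamma>) \<cdot> (\<sigma> \<star> i2 p) = \<theta>"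
proof -
  have "bij_betw (\<lambda>\<beta>. (i2 d0 \<star> \<gamma>) \<cdot> (\<beta> \<star> i2 p)) {\<beta>. is_2cell \<beta> k (d0 \<odot> t)} {\<theta>. is_2cell \<theta> (k \<odot> p) (d0 \<odot> p)}"
    using pres assms(1) unfolding preserves_ran_def is_ran_def by (auto simp: at1 ty)
  then have "\<theta> \<in> (\<lambda>\<beta>. (i2 d0 \<star> \<gamma>) \<cdot> (\<beta> \<star> i2 p)) ` {\<beta>. is_2cell \<beta> k (d0 \<odot> t)}"
    using assms(2) unfolding bij_betw_def by simp
  then show ?thesis by blast
qed

end


context two_category
begin
lemma eqv: "g \<odot> f = r \<Longrightarrow> f \<in> Ar1 \<Longrightarrow> g \<in> Ar1 \<Longrightarrow> t1 f = s1 g \<Longrightarrow> y \<in> Ar1 \<Longrightarrow> t1 y = s1 f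
   \<Longrightarrow> g \<odot> (f \<odot> y) = r \<odot> y"
  by (metis comp1_assoc)
end

context setting
begin

lemmas at = at0 at1 at2 eq1
lemmas eq1v = eqv[OF eq1(1)] eqv[OF eq1(2)] eqv[OF eq1(3)] eqv[OF eq1(4)] eqv[OF eq1(5)]

lemma nu_ex: "\<exists>k. is_1cell k B b \<and> k \<odot> d0 = i1 b \<and> k \<odot> d1 = t \<and> i2 k \<star> \<alpha> = \<gamma>"
proof -
  have "(i1 b, t, \<gamma>) \<in> cobj (triples p b b)"
    unfolding triples_def by (simp add: at ty)
  from iso_obj[OF opc_iso[OF at0(2)] this] show ?thesis
    unfolding homcat_def opc_functor_def by auto
qed

definition nu where "nu = (SOME k. is_1cell k B b \<and> k \<odot> d0 = i1 b \<and> k \<odot> d1 = t \<and> i2 k \<star> \<alpha> = \<gamma>)"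

lemma nu: "nu \<in> Ar1" "s1 nu = B" "t1 nu = b" "nu \<odot> d0 = i1 b" "nu \<odot> d1 = t" "i2 nu \<star> \<alpha> = \<gamma>"
  using someI_ex[OF nu_ex] unfolding nu_def[symmetric] by auto

lemmas nuv = eqv[OF nu(4)] eqv[OF nu(5)]

lemma ah_ex: "\<exists>\<sigma>. is_2cell \<sigma> d1 (d0 \<odot> t) \<and> (i2 d0 \<star> \<gamma>) \<cdot> (\<sigma> \<star> i2 p) = \<alpha>"
  by (rule pres_surj) (simp_all add: at)

definition ah where "ah = (SOME \<sigma>. is_2cell \<sigma> d1 (d0 \<odot> t) \<and> (i2 d0 \<star> \<gamma>) \<cdot> (\<sigma> \<star> i2 p) = \<alpha>)"

lemma ah: "ah \<in> Ar2" "s2 ah = d1" "t2 ah = d0 \<odot> t" "(i2 d0 \<star> \<gamma>) \<cdot> (ah \<star> i2 p) = \<alpha>"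
  using someI_ex[OF ah_ex] unfolding ah_def[symmetric] by auto

lemmas at' = at nu(1-3) ah(1-3)
lemmas sty = at' ty eq1v nu(4,5) nuv

lemma d0nu_alpha: "i2 (d0 \<odot> nu) \<star> \<alpha> = i2 d0 \<star> \<gamma>"
  using ww[of \<alpha> d0 nu] by (simp add: sty nu(6))

lemma Lam_ex: "\<exists>\<sigma>. is_2cell \<sigma> (i1 B) (d0 \<odot> nu) \<and> \<sigma> \<star> i2 d0 = i2 d0 \<and> \<sigma> \<star> i2 d1 = ah"
proof -
  let ?a = "((d0, d1, \<alpha>), (i2 d0, ah), (d0, d0 \<odot> t, i2 d0 \<star> \<gamma>))"
  have "(i2 d0 \<star> i2 p) \<cdot> \<alpha> = \<alpha>" by (simp add: sty)
  then have "?a \<in> carr (triples p b B)"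
    unfolding triples_def by (simp add: sty ah(4))
  from iso_arr[OF opc_iso[OF at1(4)] this, of "i1 B" "d0 \<odot> nu"]
  show ?thesis
    unfolding homcat_def opc_functor_def triples_def by (auto simp: sty d0nu_alpha)
qed

definition Lam where "Lam = (SOME \<sigma>. is_2cell \<sigma> (i1 B) (d0 \<odot> nu) \<and> \<sigma> \<star> i2 d0 = i2 d0 \<and> \<sigma> \<star> i2 d1 = ah)"

lemma Lam: "Lam \<in> Ar2" "s2 Lam = i1 B" "t2 Lam = d0 \<odot> nu" "Lam \<star> i2 d0 = i2 d0" "Lam \<star> i2 d1 = ah"
  using someI_ex[OF Lam_ex] unfolding Lam_def[symmetric] by auto

lemma Q_ex: "\<exists>k. is_1cell k P b \<and> k \<odot> D2 = t \<odot> nu \<and> k \<odot> D0 = nu"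
proof -
  have "(t \<odot> nu, nu) \<in> cobj (cocones B B d0 d1 b)"
    unfolding cocones_def by (simp add: sty)
  from iso_obj[OF po_iso[OF at0(2)] this] show ?thesis
    unfolding homcat_def po_functor_def by auto
qed

definition Q where "Q = (SOME k. is_1cell k P b \<and> k \<odot> D2 = t \<odot> nu \<and> k \<odot> D0 = nu)"

lemma Q: "Q \<in> Ar1" "s1 Q = P" "t1 Q = b" "Q \<odot> D2 = t \<odot> nu" "Q \<odot> D0 = nu"
  using someI_ex[OF Q_ex] unfolding Q_def[symmetric] by auto

lemmas Qv = eqv[OF Q(4)] eqv[OF Q(5)]
lemmas sty2 = sty Q(1-5) Qv Lam(1-3)

end


context setting
begin

lemma U_ex: "\<exists>\<sigma>. is_2cell \<sigma> (i1 P) (D0 \<odot> (d0 \<odot> Q)) \<and> \<sigma> \<star> i2 D0 = i2 D0 \<star> Lam"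
proof -
  define s1' where "s1' = i2 D0 \<star> Lam"
  define s0' where "s0' = ((i2 D0 \<star> ah) \<star> i2 nu) \<cdot> (i2 D2 \<star> Lam)"
  have e1: "s1' \<star> i2 d1 = i2 D0 \<star> ah"
    unfolding s1'_def using wlr[of Lam D0 d1] by (simp add: sty2 Lam)
  have e2: "((i2 D0 \<star> ah) \<star> i2 nu) \<star> i2 d0 = i2 D0 \<star> ah"
    using ww'[of "i2 D0 \<star> ah" nu d0] by (simp add: sty2)
  have e3: "(i2 D2 \<star> Lam) \<star> i2 d0 = i2 (D0 \<odot> d1)"
    using wlr[of Lam D2 d0] by (simp add: sty2 Lam)
  have "s0' \<star> i2 d0 = (((i2 D0 \<star> ah) \<star> i2 nu) \<star> i2 d0) \<cdot> ((i2 D2 \<star> Lam) \<star> i2 d0)"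
    unfolding s0'_def by (rule wr_v) (simp_all add: sty2)
  also have "\<dots> = i2 D0 \<star> ah" unfolding e2 e3 by (simp add: sty2)
  finally have e4: "s0' \<star> i2 d0 = s1' \<star> i2 d1" using e1 by simp
  let ?a = "((D2, D0), (s0', s1'), (D0 \<odot> (d0 \<odot> (t \<odot> nu)), D0 \<odot> (d0 \<odot> nu)))"
  have "?a \<in> carr (cocones B B d0 d1 P)"
    unfolding cocones_def using e4 by (simp add: sty2 s0'_def s1'_def)
  from iso_arr[OF po_iso[OF at1(5)] this, of "i1 P" "D0 \<odot> (d0 \<odot> Q)"]
  show ?thesis
    unfolding homcat_def po_functor_def cocones_def s1'_def by (auto simp: sty2)
qed

definition U where "U = (SOME \<sigma>. is_2cell \<sigma> (i1 P) (D0 \<odot> (d0 \<odot> Q)) \<and> \<sigma> \<star> i2 D0 = i2 D0 \<star> Lam)"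

lemma U: "U \<in> Ar2" "s2 U = i1 P" "t2 U = D0 \<odot> (d0 \<odot> Q)" "U \<star> i2 D0 = i2 D0 \<star> Lam"
  using someI_ex[OF U_ex] unfolding U_def[symmetric] by auto

lemmas sty3 = sty2 U(1-3)

end


context setting
begin

lemma K_gen:
  assumes "k \<in> Ar1" "s1 k = B" "t1 k = b" "k \<odot> d0 = i1 b"
  shows "\<gamma> \<cdot> ((i2 k \<star> ah) \<star> i2 p) = i2 k \<star> \<alpha>"
proof -
  have 1: "(i2 k \<star> ah) \<star> i2 p = i2 k \<star> (ah \<star> i2 p)"
    by (rule wlr) (simp_all add: sty3 assms)
  have 2: "i2 k \<star> (i2 d0 \<star> \<gamma>) = \<gamma>"
    using ww[of \<gamma> k d0] by (simp add: sty3 assms)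
  have "\<gamma> \<cdot> ((i2 k \<star> ah) \<star> i2 p) = (i2 k \<star> (i2 d0 \<star> \<gamma>)) \<cdot> (i2 k \<star> (ah \<star> i2 p))"
    unfolding 1 2 ..
  also have "\<dots> = i2 k \<star> ((i2 d0 \<star> \<gamma>) \<cdot> (ah \<star> i2 p))"
    by (rule wl_v[symmetric]) (simp_all add: sty3 assms)
  finally show ?thesis by (simp add: ah(4))
qed

lemma nu_ah: "i2 nu \<star> ah = i2 t"
proof (rule ran_inj[of t])
  show "\<gamma> \<cdot> ((i2 nu \<star> ah) \<star> i2 p) = \<gamma> \<cdot> (i2 t \<star> i2 p)"
    using K_gen[of nu] by (simp add: sty3 nu(6))
qed (simp_all add: sty3)

lemma s0_ah: "i2 s0 \<star> ah = \<eta>"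
proof (rule ran_inj[of "i1 b"])
  show "\<gamma> \<cdot> ((i2 s0 \<star> ah) \<star> i2 p) = \<gamma> \<cdot> (\<eta> \<star> i2 p)"
    using K_gen[of s0] by (simp add: sty3 eq2)
qed (simp_all add: sty3)

lemma QD1_alpha: "i2 (Q \<odot> D1) \<star> \<alpha> = \<gamma> \<cdot> (m \<star> i2 p)"
proof -
  have "i2 (Q \<odot> D1) \<star> \<alpha> = i2 Q \<star> (i2 D1 \<star> \<alpha>)"
    by (rule ww[symmetric]) (simp_all add: sty3)
  also have "\<dots> = (i2 Q \<star> (i2 D0 \<star> \<alpha>)) \<cdot> (i2 Q \<star> (i2 D2 \<star> \<alpha>))"
    unfolding eq2(1) by (rule wl_v) (simp_all add: sty3)
  also have "i2 Q \<star> (i2 D0 \<star> \<alpha>) = \<gamma>"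
    using ww[of \<alpha> Q D0] by (simp add: sty3 nu(6))
  also have "i2 Q \<star> (i2 D2 \<star> \<alpha>) = i2 t \<star> \<gamma>"
    using ww[of \<alpha> Q D2] ww[of \<alpha> t nu] by (simp add: sty3 nu(6))
  finally show ?thesis by (simp add: eq2(3))
qed

lemma QD1_ah: "i2 (Q \<odot> D1) \<star> ah = m"
proof (rule ran_inj[of "t \<odot> t"])
  show "\<gamma> \<cdot> ((i2 (Q \<odot> D1) \<star> ah) \<star> i2 p) = \<gamma> \<cdot> (m \<star> i2 p)"
    using K_gen[of "Q \<odot> D1"] QD1_alpha by (simp add: sty3)
qed (simp_all add: sty3)

lemma transp:
  assumes "k \<in> Ar1" "s1 k = b" "t1 k = P" "\<sigma> \<in> Ar2" "s2 \<sigma> = k" "t2 \<sigma> = D0 \<odot> (d0 \<odot> t)"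
  shows "\<gamma> \<cdot> ((i2 Q \<star> \<sigma>) \<star> i2 p) = i2 Q \<star> ((i2 (D0 \<odot> d0) \<star> \<gamma>) \<cdot> (\<sigma> \<star> i2 p))"
proof -
  have "i2 Q \<star> ((i2 (D0 \<odot> d0) \<star> \<gamma>) \<cdot> (\<sigma> \<star> i2 p)) = (i2 Q \<star> (i2 (D0 \<odot> d0) \<star> \<gamma>)) \<cdot> (i2 Q \<star> (\<sigma> \<star> i2 p))"
    by (rule wl_v) (simp_all add: sty3 assms)
  also have "i2 Q \<star> (i2 (D0 \<odot> d0) \<star> \<gamma>) = \<gamma>"
    using ww[of \<gamma> Q "D0 \<odot> d0"] by (simp add: sty3)
  also have "i2 Q \<star> (\<sigma> \<star> i2 p) = (i2 Q \<star> \<sigma>) \<star> i2 p"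
    by (rule wlr[symmetric]) (simp_all add: sty3 assms)
  finally show ?thesis ..
qed

lemma decomp:
  assumes "k \<in> Ar1" "s1 k = b" "t1 k = P" "\<sigma> \<in> Ar2" "s2 \<sigma> = k" "t2 \<sigma> = D0 \<odot> (d0 \<odot> t)"
  shows "\<sigma> = (i2 (D0 \<odot> d0) \<star> (i2 Q \<star> \<sigma>)) \<cdot> (U \<star> i2 k)"
proof -
  have a: "U \<star> i2 (D0 \<odot> (d0 \<odot> t)) = i2 (D0 \<odot> (d0 \<odot> t))"
  proof -
    have "U \<star> i2 (D0 \<odot> (d0 \<odot> t)) = ((U \<star> i2 D0) \<star> i2 d0) \<star> i2 t"
      using ww'[of U D0 d0] ww'[of "U \<star> i2 D0" d0 t] ww'[of U D0 "d0 \<odot> t"] ww'[of U d0 t]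
      by (simp add: sty3)
    also have "\<dots> = i2 (D0 \<odot> (d0 \<odot> t))"
      unfolding U(4) using wlr[of Lam D0 d0] by (simp add: sty3 Lam)
    finally show ?thesis .
  qed
  have "U \<star> \<sigma> = (U \<star> i2 (t2 \<sigma>)) \<cdot> (i2 (s2 U) \<star> \<sigma>)"
    by (rule ic1) (simp_all add: sty3 assms)
  also have "\<dots> = \<sigma>" unfolding assms(6) a by (simp add: sty3 assms)
  finally have 1: "U \<star> \<sigma> = \<sigma>" .
  have "U \<star> \<sigma> = (i2 (t2 U) \<star> \<sigma>) \<cdot> (U \<star> i2 (s2 \<sigma>))"
    by (rule ic2) (simp_all add: sty3 assms)
  also have "i2 (t2 U) \<star> \<sigma> = i2 (D0 \<odot> d0) \<star> (i2 Q \<star> \<sigma>)"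
    using ww[of \<sigma> "D0 \<odot> d0" Q] by (simp add: sty3 assms)
  finally show ?thesis using 1 assms by simp
qed

lemma inj_P:
  assumes "k \<in> Ar1" "s1 k = b" "t1 k = P" "\<sigma> \<in> Ar2" "s2 \<sigma> = k" "t2 \<sigma> = D0 \<odot> (d0 \<odot> t)"
    "\<tau> \<in> Ar2" "s2 \<tau> = k" "t2 \<tau> = D0 \<odot> (d0 \<odot> t)"
    and eq: "(i2 (D0 \<odot> d0) \<star> \<gamma>) \<cdot> (\<sigma> \<star> i2 p) = (i2 (D0 \<odot> d0) \<star> \<gamma>) \<cdot> (\<tau> \<star> i2 p)"
  shows "\<sigma> = \<tau>"
proof -
  have "i2 Q \<star> \<sigma> = i2 Q \<star> \<tau>"
  proof (rule ran_inj[of "Q \<odot> k"])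
    show "\<gamma> \<cdot> ((i2 Q \<star> \<sigma>) \<star> i2 p) = \<gamma> \<cdot> ((i2 Q \<star> \<tau>) \<star> i2 p)"
      using transp[of k \<sigma>] transp[of k \<tau>] eq assms by simp
  qed (simp_all add: sty3 assms)
  then show ?thesis using decomp[of k \<sigma>] decomp[of k \<tau>] assms by simp
qed

end


context setting
begin

lemmas vA = vassoc

lemma keyI:
  "i2 D1 \<star> ah = (i2 (D0 \<odot> d0) \<star> m) \<cdot> (((i2 D0 \<star> ah) \<star> i2 t) \<cdot> (i2 D2 \<star> ah))"
  (is "?L = ?R")
proof (rule inj_P[of "D2 \<odot> d1"])
  let ?g = "i2 (D0 \<odot> d0) \<star> \<gamma>"
  have XL: "?g \<cdot> (?L \<star> i2 p) = (i2 D0 \<star> \<alpha>) \<cdot> (i2 D2 \<star> \<alpha>)"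
  proof -
    have 1: "?L \<star> i2 p = i2 D1 \<star> (ah \<star> i2 p)" by (rule wlr) (simp_all add: sty3)
    have 2: "?g = i2 D1 \<star> (i2 d0 \<star> \<gamma>)" using ww[of \<gamma> D1 d0] by (simp add: sty3)
    have "?g \<cdot> (?L \<star> i2 p) = i2 D1 \<star> ((i2 d0 \<star> \<gamma>) \<cdot> (ah \<star> i2 p))"
      unfolding 1 2 by (rule wl_v[symmetric]) (simp_all add: sty3)
    then show ?thesis by (simp add: ah(4) eq2(1))
  qed
  let ?A1 = "i2 (D0 \<odot> d0) \<star> (m \<star> i2 p)"
  let ?A2 = "i2 D0 \<star> (ah \<star> i2 (t \<odot> p))"
  let ?A3 = "i2 D2 \<star> (ah \<star> i2 p)"
  let ?B1 = "i2 D0 \<star> (i2 (d0 \<odot> t) \<star> \<gamma>)"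
  let ?C1 = "i2 D0 \<star> (ah \<star> i2 p)"
  let ?C2 = "i2 D2 \<star> (i2 d0 \<star> \<gamma>)"
  have S1: "?R \<star> i2 p = ?A1 \<cdot> (?A2 \<cdot> ?A3)"
  proof -
    have "?R \<star> i2 p = ((i2 (D0 \<odot> d0) \<star> m) \<star> i2 p) \<cdot> ((((i2 D0 \<star> ah) \<star> i2 t) \<star> i2 p) \<cdot> ((i2 D2 \<star> ah) \<star> i2 p))"
      using wr_v[of "((i2 D0 \<star> ah) \<star> i2 t) \<cdot> (i2 D2 \<star> ah)" "i2 (D0 \<odot> d0) \<star> m" p]
        wr_v[of "i2 D2 \<star> ah" "(i2 D0 \<star> ah) \<star> i2 t" p]
      by (simp add: sty3)
    also have "(i2 (D0 \<odot> d0) \<star> m) \<star> i2 p = ?A1" by (rule wlr) (simp_all add: sty3)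
    also have "((i2 D0 \<star> ah) \<star> i2 t) \<star> i2 p = ?A2"
      using ww'[of "i2 D0 \<star> ah" t p] wlr[of ah D0 "t \<odot> p"] by (simp add: sty3)
    also have "(i2 D2 \<star> ah) \<star> i2 p = ?A3" by (rule wlr) (simp_all add: sty3)
    finally show ?thesis .
  qed
  have S2: "?g \<cdot> ?A1 = ?g \<cdot> ?B1"
  proof -
    have "?g \<cdot> ?A1 = i2 (D0 \<odot> d0) \<star> (\<gamma> \<cdot> (m \<star> i2 p))"
      by (rule wl_v[symmetric]) (simp_all add: sty3)
    also have "\<dots> = i2 (D0 \<odot> d0) \<star> (\<gamma> \<cdot> (i2 t \<star> \<gamma>))" by (simp add: eq2(3))
    also have "\<dots> = ?g \<cdot> (i2 (D0 \<odot> d0) \<star> (i2 t \<star> \<gamma>))"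
      by (rule wl_v) (simp_all add: sty3)
    also have "i2 (D0 \<odot> d0) \<star> (i2 t \<star> \<gamma>) = ?B1"
      using ww[of \<gamma> "D0 \<odot> d0" t] ww[of \<gamma> D0 "d0 \<odot> t"] by (simp add: sty3)
    finally show ?thesis .
  qed
  have S3: "?B1 \<cdot> ?A2 = ?C1 \<cdot> ?C2"
  proof -
    have "ah \<star> \<gamma> = (ah \<star> i2 (t2 \<gamma>)) \<cdot> (i2 (s2 ah) \<star> \<gamma>)" by (rule ic1) (simp_all add: sty3)
    moreover have "ah \<star> \<gamma> = (i2 (t2 ah) \<star> \<gamma>) \<cdot> (ah \<star> i2 (s2 \<gamma>))" by (rule ic2) (simp_all add: sty3)
    ultimately have icg: "(i2 (d0 \<odot> t) \<star> \<gamma>) \<cdot> (ah \<star> i2 (t \<odot> p)) = (ah \<star> i2 p) \<cdot> (i2 d1 \<star> \<gamma>)"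
      by (simp add: sty3)
    have "?B1 \<cdot> ?A2 = i2 D0 \<star> ((i2 (d0 \<odot> t) \<star> \<gamma>) \<cdot> (ah \<star> i2 (t \<odot> p)))"
      by (rule wl_v[symmetric]) (simp_all add: sty3)
    also have "\<dots> = i2 D0 \<star> ((ah \<star> i2 p) \<cdot> (i2 d1 \<star> \<gamma>))" unfolding icg ..
    also have "\<dots> = ?C1 \<cdot> (i2 D0 \<star> (i2 d1 \<star> \<gamma>))" by (rule wl_v) (simp_all add: sty3)
    also have "i2 D0 \<star> (i2 d1 \<star> \<gamma>) = ?C2"
      using ww[of \<gamma> D0 d1] ww[of \<gamma> D2 d0] by (simp add: sty3)
    finally show ?thesis .
  qed
  have S4: "?g \<cdot> ?C1 = i2 D0 \<star> \<alpha>"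
  proof -
    have "?g = i2 D0 \<star> (i2 d0 \<star> \<gamma>)" using ww[of \<gamma> D0 d0] by (simp add: sty3)
    then have "?g \<cdot> ?C1 = i2 D0 \<star> ((i2 d0 \<star> \<gamma>) \<cdot> (ah \<star> i2 p))"
      by (simp only:) (rule wl_v[symmetric]; simp add: sty3)
    then show ?thesis by (simp add: ah(4))
  qed
  have S5: "?C2 \<cdot> ?A3 = i2 D2 \<star> \<alpha>"
  proof -
    have "?C2 \<cdot> ?A3 = i2 D2 \<star> ((i2 d0 \<star> \<gamma>) \<cdot> (ah \<star> i2 p))"
      by (rule wl_v[symmetric]) (simp_all add: sty3)
    then show ?thesis by (simp add: ah(4))
  qed
  have "?g \<cdot> (?R \<star> i2 p) = ?g \<cdot> (?A1 \<cdot> (?A2 \<cdot> ?A3))" unfolding S1 ..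
  also have "\<dots> = (?g \<cdot> ?A1) \<cdot> (?A2 \<cdot> ?A3)" by (simp add: sty3 vA)
  also have "\<dots> = (?g \<cdot> ?B1) \<cdot> (?A2 \<cdot> ?A3)" unfolding S2 ..
  also have "\<dots> = ?g \<cdot> ((?B1 \<cdot> ?A2) \<cdot> ?A3)" by (simp add: sty3 vA)
  also have "\<dots> = ?g \<cdot> ((?C1 \<cdot> ?C2) \<cdot> ?A3)" unfolding S3 ..
  also have "\<dots> = (?g \<cdot> ?C1) \<cdot> (?C2 \<cdot> ?A3)" by (simp add: sty3 vA)
  also have "\<dots> = (i2 D0 \<star> \<alpha>) \<cdot> (i2 D2 \<star> \<alpha>)" unfolding S4 S5 ..
  finally show "?g \<cdot> (?L \<star> i2 p) = ?g \<cdot> (?R \<star> i2 p)" using XL by simp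
qed (simp_all add: sty3)

end


context setting
begin

lemma LD:
  assumes "h \<in> Ar1" "s1 h = x" "t1 h = b" "\<beta> \<in> Ar2" "s2 \<beta> = d1 \<odot> h" "t2 \<beta> = d0 \<odot> h"
  shows "(i2 d0 \<star> (i2 nu \<star> \<beta>)) \<cdot> (ah \<star> i2 h) = \<beta>"
proof -
  have "Lam \<star> \<beta> = (Lam \<star> i2 (t2 \<beta>)) \<cdot> (i2 (s2 Lam) \<star> \<beta>)" by (rule ic1) (simp_all add: sty3 assms)
  also have "Lam \<star> i2 (t2 \<beta>) = i2 (d0 \<odot> h)"
    using ww'[of Lam d0 h] by (simp add: sty3 assms Lam)
  finally have 1: "Lam \<star> \<beta> = \<beta>" by (simp add: sty3 assms)
  have "Lam \<star> \<beta> = (i2 (t2 Lam) \<star> \<beta>) \<cdot> (Lam \<star> i2 (s2 \<beta>))" by (rule ic2) (simp_all add: sty3 assms)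
  also have "i2 (t2 Lam) \<star> \<beta> = i2 d0 \<star> (i2 nu \<star> \<beta>)"
    using ww[of \<beta> d0 nu] by (simp add: sty3 assms)
  also have "Lam \<star> i2 (s2 \<beta>) = ah \<star> i2 h"
    using ww'[of Lam d1 h] by (simp add: sty3 assms Lam)
  finally show ?thesis using 1 by simp
qed

lemma desc_alg_obj:
  assumes "h \<in> Ar1" "s1 h = x" "t1 h = b" "\<beta> \<in> Ar2" "s2 \<beta> = d1 \<odot> h" "t2 \<beta> = d0 \<odot> h"
    and coc: "(i2 D0 \<star> \<beta>) \<cdot> (i2 D2 \<star> \<beta>) = i2 D1 \<star> \<beta>" and un: "i2 s0 \<star> \<beta> = i2 h"
  shows "i2 nu \<star> \<beta> \<in> Ar2 \<and> s2 (i2 nu \<star> \<beta>) = t \<odot> h \<and> t2 (i2 nu \<star> \<beta>) = h"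
    "(i2 nu \<star> \<beta>) \<cdot> (i2 t \<star> (i2 nu \<star> \<beta>)) = (i2 nu \<star> \<beta>) \<cdot> (m \<star> i2 h)"
    "(i2 nu \<star> \<beta>) \<cdot> (\<eta> \<star> i2 h) = i2 h"
proof -
  show "i2 nu \<star> \<beta> \<in> Ar2 \<and> s2 (i2 nu \<star> \<beta>) = t \<odot> h \<and> t2 (i2 nu \<star> \<beta>) = h"
    by (simp add: sty3 assms)
  note ld = LD[OF assms(1-6)]
  have "i2 h = i2 s0 \<star> ((i2 d0 \<star> (i2 nu \<star> \<beta>)) \<cdot> (ah \<star> i2 h))" using un ld by simp
  also have "\<dots> = (i2 s0 \<star> (i2 d0 \<star> (i2 nu \<star> \<beta>))) \<cdot> (i2 s0 \<star> (ah \<star> i2 h))"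
    by (rule wl_v) (simp_all add: sty3 assms)
  also have "i2 s0 \<star> (i2 d0 \<star> (i2 nu \<star> \<beta>)) = i2 nu \<star> \<beta>"
    using ww[of "i2 nu \<star> \<beta>" s0 d0] by (simp add: sty3 assms)
  also have "i2 s0 \<star> (ah \<star> i2 h) = \<eta> \<star> i2 h"
    using wlr[of ah s0 h] by (simp add: sty3 assms s0_ah)
  finally show "(i2 nu \<star> \<beta>) \<cdot> (\<eta> \<star> i2 h) = i2 h" ..
  have "i2 Q \<star> ((i2 D0 \<star> \<beta>) \<cdot> (i2 D2 \<star> \<beta>)) = (i2 Q \<star> (i2 D0 \<star> \<beta>)) \<cdot> (i2 Q \<star> (i2 D2 \<star> \<beta>))"
    by (rule wl_v) (simp_all add: sty3 assms)
  also have "i2 Q \<star> (i2 D0 \<star> \<beta>) = i2 nu \<star> \<beta>"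
    using ww[of \<beta> Q D0] by (simp add: sty3 assms)
  also have "i2 Q \<star> (i2 D2 \<star> \<beta>) = i2 t \<star> (i2 nu \<star> \<beta>)"
    using ww[of \<beta> Q D2] ww[of \<beta> t nu] by (simp add: sty3 assms)
  finally have 1: "i2 Q \<star> ((i2 D0 \<star> \<beta>) \<cdot> (i2 D2 \<star> \<beta>)) = (i2 nu \<star> \<beta>) \<cdot> (i2 t \<star> (i2 nu \<star> \<beta>))" .
  have "i2 Q \<star> (i2 D1 \<star> \<beta>) = i2 (Q \<odot> D1) \<star> \<beta>"
    by (rule ww) (simp_all add: sty3 assms)
  also have "\<dots> = i2 (Q \<odot> D1) \<star> ((i2 d0 \<star> (i2 nu \<star> \<beta>)) \<cdot> (ah \<star> i2 h))" using ld by simp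
  also have "\<dots> = (i2 (Q \<odot> D1) \<star> (i2 d0 \<star> (i2 nu \<star> \<beta>))) \<cdot> (i2 (Q \<odot> D1) \<star> (ah \<star> i2 h))"
    by (rule wl_v) (simp_all add: sty3 assms)
  also have "i2 (Q \<odot> D1) \<star> (i2 d0 \<star> (i2 nu \<star> \<beta>)) = i2 nu \<star> \<beta>"
    using ww[of "i2 nu \<star> \<beta>" "Q \<odot> D1" d0] by (simp add: sty3 assms)
  also have "i2 (Q \<odot> D1) \<star> (ah \<star> i2 h) = m \<star> i2 h"
    using wlr[of ah "Q \<odot> D1" h] by (simp add: sty3 assms QD1_ah)
  finally show "(i2 nu \<star> \<beta>) \<cdot> (i2 t \<star> (i2 nu \<star> \<beta>)) = (i2 nu \<star> \<beta>) \<cdot> (m \<star> i2 h)"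
    using 1 coc by simp
qed

end


context setting
begin

lemma alg_desc_obj:
  assumes "h \<in> Ar1" "s1 h = x" "t1 h = b" "\<beta> \<in> Ar2" "s2 \<beta> = t \<odot> h" "t2 \<beta> = h"
    and as: "\<beta> \<cdot> (i2 t \<star> \<beta>) = \<beta> \<cdot> (m \<star> i2 h)" and un: "\<beta> \<cdot> (\<eta> \<star> i2 h) = i2 h"
  defines "G \<equiv> (i2 d0 \<star> \<beta>) \<cdot> (ah \<star> i2 h)"
  shows "G \<in> Ar2 \<and> s2 G = d1 \<odot> h \<and> t2 G = d0 \<odot> h"
    "(i2 D0 \<star> G) \<cdot> (i2 D2 \<star> G) = i2 D1 \<star> G"
    "i2 s0 \<star> G = i2 h"
    "i2 nu \<star> G = \<beta>"
proof -
  show "G \<in> Ar2 \<and> s2 G = d1 \<odot> h \<and> t2 G = d0 \<odot> h" unfolding G_def by (simp add: sty3 assms)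
  have "i2 s0 \<star> G = (i2 s0 \<star> (i2 d0 \<star> \<beta>)) \<cdot> (i2 s0 \<star> (ah \<star> i2 h))"
    unfolding G_def by (rule wl_v) (simp_all add: sty3 assms)
  also have "i2 s0 \<star> (i2 d0 \<star> \<beta>) = \<beta>"
    using ww[of \<beta> s0 d0] by (simp add: sty3 assms)
  also have "i2 s0 \<star> (ah \<star> i2 h) = \<eta> \<star> i2 h"
    using wlr[of ah s0 h] by (simp add: sty3 assms s0_ah)
  finally show "i2 s0 \<star> G = i2 h" using un by simp
  have "i2 nu \<star> G = (i2 nu \<star> (i2 d0 \<star> \<beta>)) \<cdot> (i2 nu \<star> (ah \<star> i2 h))"
    unfolding G_def by (rule wl_v) (simp_all add: sty3 assms)
  also have "i2 nu \<star> (i2 d0 \<star> \<beta>) = \<beta>"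
    using ww[of \<beta> nu d0] by (simp add: sty3 assms)
  also have "i2 nu \<star> (ah \<star> i2 h) = i2 (t \<odot> h)"
    using wlr[of ah nu h] by (simp add: sty3 assms nu_ah)
  finally show "i2 nu \<star> G = \<beta>" by (simp add: sty3 assms)
  let ?E0 = "i2 (D0 \<odot> d0) \<star> \<beta>"
  let ?Em = "i2 (D0 \<odot> d0) \<star> (m \<star> i2 h)"
  let ?Ea = "i2 D0 \<star> (ah \<star> i2 (t \<odot> h))"
  let ?Eb = "i2 D2 \<star> (ah \<star> i2 h)"
  let ?Ec = "i2 D0 \<star> (ah \<star> i2 h)"
  let ?Ed = "i2 D0 \<star> (i2 d1 \<star> \<beta>)"
  let ?Et = "i2 D0 \<star> (i2 (d0 \<odot> t) \<star> \<beta>)"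
  have R: "i2 D1 \<star> G = ?E0 \<cdot> (?Em \<cdot> (?Ea \<cdot> ?Eb))"
  proof -
    have "i2 D1 \<star> G = (i2 D1 \<star> (i2 d0 \<star> \<beta>)) \<cdot> (i2 D1 \<star> (ah \<star> i2 h))"
      unfolding G_def by (rule wl_v) (simp_all add: sty3 assms)
    also have "i2 D1 \<star> (i2 d0 \<star> \<beta>) = ?E0"
      using ww[of \<beta> D1 d0] by (simp add: sty3 assms)
    also have "i2 D1 \<star> (ah \<star> i2 h) = (i2 D1 \<star> ah) \<star> i2 h"
      by (rule wlr[symmetric]) (simp_all add: sty3 assms)
    also have "\<dots> = ((i2 (D0 \<odot> d0) \<star> m) \<star> i2 h) \<cdot> ((((i2 D0 \<star> ah) \<star> i2 t) \<star> i2 h) \<cdot> ((i2 D2 \<star> ah) \<star> i2 h))"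
      unfolding keyI
      using wr_v[of "((i2 D0 \<star> ah) \<star> i2 t) \<cdot> (i2 D2 \<star> ah)" "i2 (D0 \<odot> d0) \<star> m" h]
        wr_v[of "i2 D2 \<star> ah" "(i2 D0 \<star> ah) \<star> i2 t" h]
      by (simp add: sty3 assms)
    also have "(i2 (D0 \<odot> d0) \<star> m) \<star> i2 h = ?Em" by (rule wlr) (simp_all add: sty3 assms)
    also have "((i2 D0 \<star> ah) \<star> i2 t) \<star> i2 h = ?Ea"
      using ww'[of "i2 D0 \<star> ah" t h] wlr[of ah D0 "t \<odot> h"] by (simp add: sty3 assms)
    also have "(i2 D2 \<star> ah) \<star> i2 h = ?Eb" by (rule wlr) (simp_all add: sty3 assms)
    finally show ?thesis .
  qed
  have L: "(i2 D0 \<star> G) \<cdot> (i2 D2 \<star> G) = ?E0 \<cdot> (?Ec \<cdot> (?Ed \<cdot> ?Eb))"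
  proof -
    have "i2 D0 \<star> G = (i2 D0 \<star> (i2 d0 \<star> \<beta>)) \<cdot> ?Ec"
      unfolding G_def by (rule wl_v) (simp_all add: sty3 assms)
    also have "i2 D0 \<star> (i2 d0 \<star> \<beta>) = ?E0"
      using ww[of \<beta> D0 d0] by (simp add: sty3 assms)
    finally have 1: "i2 D0 \<star> G = ?E0 \<cdot> ?Ec" .
    have "i2 D2 \<star> G = (i2 D2 \<star> (i2 d0 \<star> \<beta>)) \<cdot> ?Eb"
      unfolding G_def by (rule wl_v) (simp_all add: sty3 assms)
    also have "i2 D2 \<star> (i2 d0 \<star> \<beta>) = ?Ed"
      using ww[of \<beta> D2 d0] ww[of \<beta> D0 d1] by (simp add: sty3 assms)
    finally have 2: "i2 D2 \<star> G = ?Ed \<cdot> ?Eb" .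
    show ?thesis unfolding 1 2 by (simp add: sty3 assms vA)
  qed
  have S1: "?Ec \<cdot> ?Ed = ?Et \<cdot> ?Ea"
  proof -
    have "ah \<star> \<beta> = (ah \<star> i2 (t2 \<beta>)) \<cdot> (i2 (s2 ah) \<star> \<beta>)" by (rule ic1) (simp_all add: sty3 assms)
    moreover have "ah \<star> \<beta> = (i2 (t2 ah) \<star> \<beta>) \<cdot> (ah \<star> i2 (s2 \<beta>))" by (rule ic2) (simp_all add: sty3 assms)
    ultimately have icg: "(ah \<star> i2 h) \<cdot> (i2 d1 \<star> \<beta>) = (i2 (d0 \<odot> t) \<star> \<beta>) \<cdot> (ah \<star> i2 (t \<odot> h))"
      by (simp add: sty3 assms)
    have "?Ec \<cdot> ?Ed = i2 D0 \<star> ((ah \<star> i2 h) \<cdot> (i2 d1 \<star> \<beta>))"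
      by (rule wl_v[symmetric]) (simp_all add: sty3 assms)
    also have "\<dots> = i2 D0 \<star> ((i2 (d0 \<odot> t) \<star> \<beta>) \<cdot> (ah \<star> i2 (t \<odot> h)))" unfolding icg ..
    also have "\<dots> = ?Et \<cdot> ?Ea" by (rule wl_v) (simp_all add: sty3 assms)
    finally show ?thesis .
  qed
  have S2: "?E0 \<cdot> ?Et = ?E0 \<cdot> ?Em"
  proof -
    have "?Et = i2 (D0 \<odot> d0) \<star> (i2 t \<star> \<beta>)"
      using ww[of \<beta> "D0 \<odot> d0" t] ww[of \<beta> D0 "d0 \<odot> t"] by (simp add: sty3 assms)
    then have "?E0 \<cdot> ?Et = i2 (D0 \<odot> d0) \<star> (\<beta> \<cdot> (i2 t \<star> \<beta>))"
      by (simp only:) (rule wl_v[symmetric]; simp add: sty3 assms)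
    also have "\<dots> = i2 (D0 \<odot> d0) \<star> (\<beta> \<cdot> (m \<star> i2 h))" unfolding as ..
    also have "\<dots> = ?E0 \<cdot> ?Em" by (rule wl_v) (simp_all add: sty3 assms)
    finally show ?thesis .
  qed
  have "?E0 \<cdot> (?Ec \<cdot> (?Ed \<cdot> ?Eb)) = ?E0 \<cdot> ((?Ec \<cdot> ?Ed) \<cdot> ?Eb)" by (simp add: sty3 assms vA)
  also have "\<dots> = ?E0 \<cdot> ((?Et \<cdot> ?Ea) \<cdot> ?Eb)" unfolding S1 ..
  also have "\<dots> = (?E0 \<cdot> ?Et) \<cdot> (?Ea \<cdot> ?Eb)" by (simp add: sty3 assms vA)
  also have "\<dots> = (?E0 \<cdot> ?Em) \<cdot> (?Ea \<cdot> ?Eb)" unfolding S2 ..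
  also have "\<dots> = ?E0 \<cdot> (?Em \<cdot> (?Ea \<cdot> ?Eb))" by (simp add: sty3 assms vA)
  finally show "(i2 D0 \<star> G) \<cdot> (i2 D2 \<star> G) = i2 D1 \<star> G" unfolding L R .
qed

lemma desc_alg_arr:
  assumes "h1 \<in> Ar1" "s1 h1 = x" "t1 h1 = b" "h0 \<in> Ar1" "s1 h0 = x" "t1 h0 = b"
    "\<beta>1 \<in> Ar2" "s2 \<beta>1 = d1 \<odot> h1" "t2 \<beta>1 = d0 \<odot> h1"
    "\<beta>0 \<in> Ar2" "s2 \<beta>0 = d1 \<odot> h0" "t2 \<beta>0 = d0 \<odot> h0"
    "\<xi> \<in> Ar2" "s2 \<xi> = h1" "t2 \<xi> = h0"
    and eq: "\<beta>0 \<cdot> (i2 d1 \<star> \<xi>) = (i2 d0 \<star> \<xi>) \<cdot> \<beta>1"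
  shows "\<xi> \<cdot> (i2 nu \<star> \<beta>1) = (i2 nu \<star> \<beta>0) \<cdot> (i2 t \<star> \<xi>)"
proof -
  have "i2 nu \<star> (\<beta>0 \<cdot> (i2 d1 \<star> \<xi>)) = (i2 nu \<star> \<beta>0) \<cdot> (i2 nu \<star> (i2 d1 \<star> \<xi>))"
    by (rule wl_v) (simp_all add: sty3 assms)
  also have "i2 nu \<star> (i2 d1 \<star> \<xi>) = i2 t \<star> \<xi>"
    using ww[of \<xi> nu d1] by (simp add: sty3 assms)
  finally have 1: "i2 nu \<star> (\<beta>0 \<cdot> (i2 d1 \<star> \<xi>)) = (i2 nu \<star> \<beta>0) \<cdot> (i2 t \<star> \<xi>)" .
  have "i2 nu \<star> ((i2 d0 \<star> \<xi>) \<cdot> \<beta>1) = (i2 nu \<star> (i2 d0 \<star> \<xi>)) \<cdot> (i2 nu \<star> \<beta>1)"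
    by (rule wl_v) (simp_all add: sty3 assms)
  also have "i2 nu \<star> (i2 d0 \<star> \<xi>) = \<xi>"
    using ww[of \<xi> nu d0] by (simp add: sty3 assms)
  finally show ?thesis using 1 eq by simp
qed

lemma alg_desc_arr:
  assumes "h1 \<in> Ar1" "s1 h1 = x" "t1 h1 = b" "h0 \<in> Ar1" "s1 h0 = x" "t1 h0 = b"
    "\<beta>1 \<in> Ar2" "s2 \<beta>1 = t \<odot> h1" "t2 \<beta>1 = h1"
    "\<beta>0 \<in> Ar2" "s2 \<beta>0 = t \<odot> h0" "t2 \<beta>0 = h0"
    "\<xi> \<in> Ar2" "s2 \<xi> = h1" "t2 \<xi> = h0"
    and eq: "\<xi> \<cdot> \<beta>1 = \<beta>0 \<cdot> (i2 t \<star> \<xi>)"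
  shows "((i2 d0 \<star> \<beta>0) \<cdot> (ah \<star> i2 h0)) \<cdot> (i2 d1 \<star> \<xi>) = (i2 d0 \<star> \<xi>) \<cdot> ((i2 d0 \<star> \<beta>1) \<cdot> (ah \<star> i2 h1))"
proof -
  have "ah \<star> \<xi> = (ah \<star> i2 (t2 \<xi>)) \<cdot> (i2 (s2 ah) \<star> \<xi>)" by (rule ic1) (simp_all add: sty3 assms)
  moreover have "ah \<star> \<xi> = (i2 (t2 ah) \<star> \<xi>) \<cdot> (ah \<star> i2 (s2 \<xi>))" by (rule ic2) (simp_all add: sty3 assms)
  moreover have "i2 (d0 \<odot> t) \<star> \<xi> = i2 d0 \<star> (i2 t \<star> \<xi>)"
    using ww[of \<xi> d0 t] by (simp add: sty3 assms)
  ultimately have icg: "(ah \<star> i2 h0) \<cdot> (i2 d1 \<star> \<xi>) = (i2 d0 \<star> (i2 t \<star> \<xi>)) \<cdot> (ah \<star> i2 h1)"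
    by (simp add: sty3 assms)
  have w1: "(i2 d0 \<star> \<beta>0) \<cdot> (i2 d0 \<star> (i2 t \<star> \<xi>)) = i2 d0 \<star> (\<beta>0 \<cdot> (i2 t \<star> \<xi>))"
    by (rule wl_v[symmetric]) (simp_all add: sty3 assms)
  have w2: "i2 d0 \<star> (\<xi> \<cdot> \<beta>1) = (i2 d0 \<star> \<xi>) \<cdot> (i2 d0 \<star> \<beta>1)"
    by (rule wl_v) (simp_all add: sty3 assms)
  have "((i2 d0 \<star> \<beta>0) \<cdot> (ah \<star> i2 h0)) \<cdot> (i2 d1 \<star> \<xi>) = (i2 d0 \<star> \<beta>0) \<cdot> ((ah \<star> i2 h0) \<cdot> (i2 d1 \<star> \<xi>))"
    by (simp add: sty3 assms vA)
  also have "\<dots> = ((i2 d0 \<star> \<beta>0) \<cdot> (i2 d0 \<star> (i2 t \<star> \<xi>))) \<cdot> (ah \<star> i2 h1)"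
    unfolding icg by (simp add: sty3 assms vA)
  also have "\<dots> = (i2 d0 \<star> (\<xi> \<cdot> \<beta>1)) \<cdot> (ah \<star> i2 h1)" unfolding w1 eq ..
  also have "\<dots> = (i2 d0 \<star> \<xi>) \<cdot> ((i2 d0 \<star> \<beta>1) \<cdot> (ah \<star> i2 h1))" unfolding w2 by (simp add: sty3 assms vA)
  finally show ?thesis .
qed

end


context setting
begin

abbreviation "DS x \<equiv> Desc b d0 d1 D0 D1 D2 s0 x"
abbreviation "AL x \<equiv> Alg b t m \<eta> x"

definition phi where "phi = (\<lambda>(h, \<beta>). (h, i2 nu \<star> \<beta>))"
definition psi where "psi = (\<lambda>(h, \<beta>). (h, (i2 d0 \<star> \<beta>) \<cdot> (ah \<star> i2 h)))"
definition Phi where "Phi = (phi, \<lambda>(o1, \<xi>, o0). (phi o1, \<xi>, phi o0))"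
definition Psi where "Psi = (psi, \<lambda>(o1, \<xi>, o0). (psi o1, \<xi>, psi o0))"

lemma DS_obj: "(h, \<beta>) \<in> cobj (DS x) \<longleftrightarrow> is_1cell h x b \<and> is_2cell \<beta> (d1 \<odot> h) (d0 \<odot> h) \<and>
   (i2 D0 \<star> \<beta>) \<cdot> (i2 D2 \<star> \<beta>) = i2 D1 \<star> \<beta> \<and> i2 s0 \<star> \<beta> = i2 h"
  by (simp add: Desc_def Let_def)

lemma AL_obj: "(h, \<beta>) \<in> cobj (AL x) \<longleftrightarrow> is_1cell h x b \<and> is_2cell \<beta> (t \<odot> h) h \<and>
   \<beta> \<cdot> (i2 t \<star> \<beta>) = \<beta> \<cdot> (m \<star> i2 h) \<and> \<beta> \<cdot> (\<eta> \<star> i2 h) = i2 h"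
  by (simp add: Alg_def Let_def)

lemma DS_arr: "((h1, \<beta>1), \<xi>, (h0, \<beta>0)) \<in> carr (DS x) \<longleftrightarrow> (h1, \<beta>1) \<in> cobj (DS x) \<and> (h0, \<beta>0) \<in> cobj (DS x) \<and>
    is_2cell \<xi> h1 h0 \<and> \<beta>0 \<cdot> (i2 d1 \<star> \<xi>) = (i2 d0 \<star> \<xi>) \<cdot> \<beta>1"
  by (simp add: Desc_def Let_def)

lemma AL_arr: "((h1, \<beta>1), \<xi>, (h0, \<beta>0)) \<in> carr (AL x) \<longleftrightarrow> (h1, \<beta>1) \<in> cobj (AL x) \<and> (h0, \<beta>0) \<in> cobj (AL x) \<and>
    is_2cell \<xi> h1 h0 \<and> \<xi> \<cdot> \<beta>1 = \<beta>0 \<cdot> (i2 t \<star> \<xi>)"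
  by (simp add: Alg_def Let_def)

lemma DS_arr': "a \<in> carr (DS x) \<Longrightarrow> \<exists>h1 \<beta>1 \<xi> h0 \<beta>0. a = ((h1, \<beta>1), \<xi>, (h0, \<beta>0))"
  by (cases a) auto
lemma DS_ops: "cdom (DS x) = fst" "ccod (DS x) = (\<lambda>a. snd (snd a))"
   "ccomp (DS x) = (\<lambda>(ob1', \<xi>', ob0') (ob1, \<xi>, ob0). (ob1, \<xi>' \<cdot> \<xi>, ob0'))"
   "cid (DS x) = (\<lambda>ob. (ob, i2 (fst ob), ob))"
  by (simp_all add: Desc_def Let_def)
lemma AL_ops: "cdom (AL x) = fst" "ccod (AL x) = (\<lambda>a. snd (snd a))"
   "ccomp (AL x) = (\<lambda>(ob1', \<xi>', ob0') (ob1, \<xi>, ob0). (ob1, \<xi>' \<cdot> \<xi>, ob0'))"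
   "cid (AL x) = (\<lambda>ob. (ob, i2 (fst ob), ob))"
  by (simp_all add: Alg_def Let_def)

lemma phi_obj: "(h, \<beta>) \<in> cobj (DS x) \<Longrightarrow> phi (h, \<beta>) \<in> cobj (AL x)"
  unfolding DS_obj phi_def using desc_alg_obj[of h x \<beta>] by (auto simp: AL_obj)

lemma psi_obj: "(h, \<beta>) \<in> cobj (AL x) \<Longrightarrow> psi (h, \<beta>) \<in> cobj (DS x)"
  unfolding AL_obj psi_def using alg_desc_obj[of h x \<beta>] by (auto simp: DS_obj)

lemma psi_phi: "(h, \<beta>) \<in> cobj (DS x) \<Longrightarrow> psi (phi (h, \<beta>)) = (h, \<beta>)"
  unfolding DS_obj psi_def phi_def using LD[of h x \<beta>] by auto

lemma phi_psi: "(h, \<beta>) \<in> cobj (AL x) \<Longrightarrow> phi (psi (h, \<beta>)) = (h, \<beta>)"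
  unfolding AL_obj psi_def phi_def using alg_desc_obj[of h x \<beta>] by auto

lemma fst_phi: "fst (phi ob) = fst ob" by (cases ob) (simp add: phi_def)
lemma fst_psi: "fst (psi ob) = fst ob" by (cases ob) (simp add: psi_def)

lemma Phi_arr: assumes a: "a \<in> carr (DS x)"
  shows "snd Phi a \<in> carr (AL x) \<and> cdom (AL x) (snd Phi a) = fst Phi (cdom (DS x) a) \<and>
        ccod (AL x) (snd Phi a) = fst Phi (ccod (DS x) a)"
proof -
  obtain h1 \<beta>1 \<xi> h0 \<beta>0 where ae: "a = ((h1, \<beta>1), \<xi>, (h0, \<beta>0))" using a DS_arr' by blast
  have "phi (h1, \<beta>1) = (h1, i2 nu \<star> \<beta>1)" "phi (h0, \<beta>0) = (h0, i2 nu \<star> \<beta>0)" by (simp_all add: phi_def)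
  then show ?thesis
    using a phi_obj[of h1 \<beta>1 x] phi_obj[of h0 \<beta>0 x] desc_alg_arr[of h1 x h0 \<beta>1 \<beta>0 \<xi>]
    unfolding ae by (auto simp: DS_arr AL_arr Phi_def DS_ops AL_ops DS_obj)
qed

lemma Phi_functor: "is_functor (DS x) (AL x) Phi"
  unfolding is_functor_def
proof (intro conjI ballI impI)
  fix ob assume "ob \<in> cobj (DS x)" then show "fst Phi ob \<in> cobj (AL x)"
    by (cases ob) (simp add: Phi_def phi_obj)
next
  fix a assume "a \<in> carr (DS x)"
  then show "snd Phi a \<in> carr (AL x)" "cdom (AL x) (snd Phi a) = fst Phi (cdom (DS x) a)" "ccod (AL x) (snd Phi a) = fst Phi (ccod (DS x) a)"
    using Phi_arr by blast+
next
  fix a a' assume "a \<in> carr (DS x)" "a' \<in> carr (DS x)" "ccod (DS x) a = cdom (DS x) a'"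
  then show "snd Phi (ccomp (DS x) a' a) = ccomp (AL x) (snd Phi a') (snd Phi a)"
    using DS_arr'[of a x] DS_arr'[of a' x] by (auto simp: Phi_def DS_ops AL_ops)
next
  fix ob assume "ob \<in> cobj (DS x)"
  then show "snd Phi (cid (DS x) ob) = cid (AL x) (fst Phi ob)"
    by (simp add: Phi_def DS_ops AL_ops fst_phi)
qed

lemma AL_arr': "a \<in> carr (AL x) \<Longrightarrow> \<exists>h1 \<beta>1 \<xi> h0 \<beta>0. a = ((h1, \<beta>1), \<xi>, (h0, \<beta>0))"
  by (cases a) auto

lemma Psi_arr: assumes a: "a \<in> carr (AL x)"
  shows "snd Psi a \<in> carr (DS x) \<and> cdom (DS x) (snd Psi a) = fst Psi (cdom (AL x) a) \<and>
        ccod (DS x) (snd Psi a) = fst Psi (ccod (AL x) a)"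
proof -
  obtain h1 \<beta>1 \<xi> h0 \<beta>0 where ae: "a = ((h1, \<beta>1), \<xi>, (h0, \<beta>0))" using a AL_arr' by blast
  have "psi (h1, \<beta>1) = (h1, (i2 d0 \<star> \<beta>1) \<cdot> (ah \<star> i2 h1))" "psi (h0, \<beta>0) = (h0, (i2 d0 \<star> \<beta>0) \<cdot> (ah \<star> i2 h0))"
    by (simp_all add: psi_def)
  then show ?thesis
    using a psi_obj[of h1 \<beta>1 x] psi_obj[of h0 \<beta>0 x] alg_desc_arr[of h1 x h0 \<beta>1 \<beta>0 \<xi>]
    unfolding ae by (auto simp: DS_arr AL_arr Psi_def DS_ops AL_ops AL_obj)
qed

lemma Psi_functor: "is_functor (AL x) (DS x) Psi"
  unfolding is_functor_def
proof (intro conjI ballI impI)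
  fix ob assume "ob \<in> cobj (AL x)" then show "fst Psi ob \<in> cobj (DS x)"
    by (cases ob) (simp add: Psi_def psi_obj)
next
  fix a assume "a \<in> carr (AL x)"
  then show "snd Psi a \<in> carr (DS x)" "cdom (DS x) (snd Psi a) = fst Psi (cdom (AL x) a)" "ccod (DS x) (snd Psi a) = fst Psi (ccod (AL x) a)"
    using Psi_arr by blast+
next
  fix a a' assume "a \<in> carr (AL x)" "a' \<in> carr (AL x)" "ccod (AL x) a = cdom (AL x) a'"
  then show "snd Psi (ccomp (AL x) a' a) = ccomp (DS x) (snd Psi a') (snd Psi a)"
    using AL_arr'[of a x] AL_arr'[of a' x] by (auto simp: Psi_def DS_ops AL_ops)
next
  fix ob assume "ob \<in> cobj (AL x)"
  then show "snd Psi (cid (AL x) ob) = cid (DS x) (fst Psi ob)"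
    by (simp add: Psi_def DS_ops AL_ops fst_psi)
qed

lemma Phi_iso: "cat_iso (DS x) (AL x) Phi"
  unfolding cat_iso_def
proof (intro conjI exI[of _ Psi])
  show "is_functor (DS x) (AL x) Phi" by (rule Phi_functor)
  show "is_functor (AL x) (DS x) Psi" by (rule Psi_functor)
  show "fun_eq (DS x) (fcomp Psi Phi) (id, id)"
    unfolding fun_eq_def fcomp_def
  proof (intro conjI ballI)
    fix ob assume "ob \<in> cobj (DS x)" then show "fst (fst Psi \<circ> fst Phi, snd Psi \<circ> snd Phi) ob = fst (id, id) ob"
      by (cases ob) (simp add: Psi_def Phi_def psi_phi)
  next
    fix a assume a: "a \<in> carr (DS x)"
    then obtain h1 \<beta>1 \<xi> h0 \<beta>0 where ae: "a = ((h1, \<beta>1), \<xi>, (h0, \<beta>0))" using DS_arr' by blast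
    show "snd (fst Psi \<circ> fst Phi, snd Psi \<circ> snd Phi) a = snd (id, id) a"
      using a psi_phi[of h1 \<beta>1 x] psi_phi[of h0 \<beta>0 x] unfolding ae by (simp add: Psi_def Phi_def DS_arr)
  qed
  show "fun_eq (AL x) (fcomp Phi Psi) (id, id)"
    unfolding fun_eq_def fcomp_def
  proof (intro conjI ballI)
    fix ob assume "ob \<in> cobj (AL x)" then show "fst (fst Phi \<circ> fst Psi, snd Phi \<circ> snd Psi) ob = fst (id, id) ob"
      by (cases ob) (simp add: Psi_def Phi_def phi_psi)
  next
    fix a assume a: "a \<in> carr (AL x)"
    then obtain h1 \<beta>1 \<xi> h0 \<beta>0 where ae: "a = ((h1, \<beta>1), \<xi>, (h0, \<beta>0))" using AL_arr' by blast
    show "snd (fst Phi \<circ> fst Psi, snd Phi \<circ> snd Psi) a = snd (id, id) a"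
      using a phi_psi[of h1 \<beta>1 x] phi_psi[of h0 \<beta>0 x] unfolding ae by (simp add: Psi_def Phi_def AL_arr)
  qed
qed

end


context setting
begin

lemma forget_eq: "fun_eq (DS x) (fcomp forget Phi) forget"
  unfolding fun_eq_def fcomp_def forget_def
proof (intro conjI ballI)
  fix ob show "fst (fst (fst, \<lambda>a. fst (snd a)) \<circ> fst Phi, snd (fst, \<lambda>a. fst (snd a)) \<circ> snd Phi) ob =
         fst (fst, \<lambda>a. fst (snd a)) ob"
    by (simp add: Phi_def fst_phi)
next
  fix a assume "a \<in> carr (DS x)"
  then obtain h1 \<beta>1 \<xi> h0 \<beta>0 where ae: "a = ((h1, \<beta>1), \<xi>, (h0, \<beta>0))" using DS_arr' by blast
  show "snd (fst (fst, \<lambda>a. fst (snd a)) \<circ> fst Phi, snd (fst, \<lambda>a. fst (snd a)) \<circ> snd Phi) a =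
         snd (fst, \<lambda>a. fst (snd a)) a"
    unfolding ae by (simp add: Phi_def)
qed

lemma phiK: "is_1cell g x e \<Longrightarrow> phi (p \<odot> g, \<alpha> \<star> i2 g) = (p \<odot> g, \<gamma> \<star> i2 g)"
  unfolding phi_def using wlr[of \<alpha> nu g] by (simp add: sty3 nu(6))

lemma K_eq: "fun_eq (homcat x e) (fcomp Phi (Kfun p \<alpha>)) (Kfun p \<gamma>)"
  unfolding fun_eq_def fcomp_def
proof (intro conjI ballI)
  fix g assume "g \<in> cobj (homcat x e)"
  then show "fst (fst Phi \<circ> fst (Kfun p \<alpha>), snd Phi \<circ> snd (Kfun p \<alpha>)) g = fst (Kfun p \<gamma>) g"
    by (simp add: homcat_def Kfun_def Phi_def phiK)
next
  fix \<chi> assume "\<chi> \<in> carr (homcat x e)"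
  then show "snd (fst Phi \<circ> fst (Kfun p \<alpha>), snd Phi \<circ> snd (Kfun p \<alpha>)) \<chi> = snd (Kfun p \<gamma>) \<chi>"
    using phiK[of "s2 \<chi>" x] phiK[of "t2 \<chi>" x] by (simp add: homcat_def Kfun_def Phi_def)
qed

lemma phi_pre: "(h, \<beta>) \<in> cobj (DS x) \<Longrightarrow> is_1cell f x' x \<Longrightarrow>
    phi (h \<odot> f, \<beta> \<star> i2 f) = (h \<odot> f, (i2 nu \<star> \<beta>) \<star> i2 f)"
  unfolding phi_def DS_obj using wlr[of \<beta> nu f] by (simp add: sty3)

lemma nat1: "f \<in> cobj (homcat x' x) \<Longrightarrow>
   fun_eq (DS x) (fcomp Phi (precomp1 f)) (fcomp (precomp1 f) Phi)"
  unfolding fun_eq_def fcomp_def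
proof (intro conjI ballI)
  fix ob assume f: "f \<in> cobj (homcat x' x)" and ob: "ob \<in> cobj (DS x)"
  obtain h \<beta> where "ob = (h, \<beta>)" by (cases ob)
  then show "fst (fst Phi \<circ> fst (precomp1 f), snd Phi \<circ> snd (precomp1 f)) ob =
         fst (fst (precomp1 f) \<circ> fst Phi, snd (precomp1 f) \<circ> snd Phi) ob"
    using f ob phi_pre[of h \<beta> x f x'] by (simp add: homcat_def Phi_def precomp1_def phi_def)
next
  fix a assume f: "f \<in> cobj (homcat x' x)" and a: "a \<in> carr (DS x)"
  then obtain h1 \<beta>1 \<xi> h0 \<beta>0 where ae: "a = ((h1, \<beta>1), \<xi>, (h0, \<beta>0))" using DS_arr' by blast
  show "snd (fst Phi \<circ> fst (precomp1 f), snd Phi \<circ> snd (precomp1 f)) a =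
         snd (fst (precomp1 f) \<circ> fst Phi, snd (precomp1 f) \<circ> snd Phi) a"
    using f a phi_pre[of h1 \<beta>1 x f x'] phi_pre[of h0 \<beta>0 x f x'] unfolding ae
    by (simp add: homcat_def Phi_def precomp1_def phi_def DS_arr)
qed

lemma nat2: "\<theta> \<in> carr (homcat x' x) \<Longrightarrow> ob \<in> cobj (DS x) \<Longrightarrow>
   snd Phi (precomp2 \<theta> ob) = precomp2 \<theta> (fst Phi ob)"
proof -
  assume th: "\<theta> \<in> carr (homcat x' x)" and ob: "ob \<in> cobj (DS x)"
  obtain h \<beta> where obe: "ob = (h, \<beta>)" by (cases ob)
  show ?thesis
    using th ob phi_pre[of h \<beta> x "s2 \<theta>" x'] phi_pre[of h \<beta> x "t2 \<theta>" x'] unfolding obe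
    by (simp add: homcat_def Phi_def precomp2_def phi_def)
qed

end

theorem theorem4p7:
  fixes A :: "('o,'a,'c) two_cat"
    and e b B P :: 'o
    and p d0 d1 D0 D1 D2 s0 t :: 'a
    and \<alpha> \<gamma> m \<eta> :: 'c
  assumes "two_category A"
    and "TC.is_cokernel_diagram A e b p B d0 d1 \<alpha> P D0 D1 D2 s0"
    and "TC.is_ran A p p t \<gamma>"
    and "TC.preserves_ran A d0 p p t \<gamma>"
    and "TC.is_codensity_monad A b p t \<gamma> m \<eta>"
  shows "\<exists>\<Phi>.
     (\<forall>x\<in>tc_obj A.
        cat_iso (TC.Desc A b d0 d1 D0 D1 D2 s0 x) (TC.Alg A b t m \<eta> x) (\<Phi> x) \<and>
        fun_eq (TC.Desc A b d0 d1 D0 D1 D2 s0 x) (fcomp forget (\<Phi> x)) forget \<and>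
        fun_eq (TC.homcat A x e) (fcomp (\<Phi> x) (TC.Kfun A p \<alpha>)) (TC.Kfun A p \<gamma>)) \<and>
     (\<forall>x\<in>tc_obj A. \<forall>x'\<in>tc_obj A.
        (\<forall>f\<in>cobj (TC.homcat A x' x).
           fun_eq (TC.Desc A b d0 d1 D0 D1 D2 s0 x)
             (fcomp (\<Phi> x') (TC.precomp1 A f)) (fcomp (TC.precomp1 A f) (\<Phi> x))) \<and>
        (\<forall>\<theta>\<in>carr (TC.homcat A x' x). \<forall>ob\<in>cobj (TC.Desc A b d0 d1 D0 D1 D2 s0 x).
           snd (\<Phi> x') (TC.precomp2 A \<theta> ob) = TC.precomp2 A \<theta> (fst (\<Phi> x) ob)))"
proof -
  interpret S: setting A e b B P p d0 d1 D0 D1 D2 s0 t \<alpha> \<gamma> m \<eta>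
    using assms unfolding setting_def setting_axioms_def by blast
  show ?thesis
    apply (rule exI[of _ "\<lambda>x. S.Phi"])
    using S.Phi_iso S.forget_eq S.K_eq S.nat1 S.nat2 by blast
qed

end
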